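(* Let $f\in\mathcal{F}$, let the parameters be randomly initialized as described, and run SGD as described, under the no-explosion assumption with constant $K$. Then there is a constant $C>0$ depending only on $d$ and $K$ (not on $m,\eta,t,T,N,\|f\|_{\mathcal{F}},{\bm x}$) such that for every realization, every ${\bm x}\in\Gamma$, every $t\in\{1,\dots,T\}$ and every $i\in\{1,\dots,m\}$, writing $\rho:=m^{-\alpha-2\beta}\|f\|_{\mathcal{F}}+1$: (a) $\|{\bm w}_i^{(t)}-{\bm w}_i^{(0)}\|_2\le C\,\eta t m^{-\alpha}\rho$; (b) $\big|\psi({\bm x};W^{(0)}+W_t)-g({\bm x};W^{(0)}+W_t)\big|\le C\big(\eta^3t^3m^{1-4\alpha}\rho^3+\eta t m^{1-2\alpha-2\beta}\rho\big)$; (c) $\big\|\nabla_W\mathcal{L}(\psi({\bm x};W^{(0)}+W_t))-\nabla_W\mathcal{L}(g({\bm x};W^{(0)}+W_t))\big\|_{2,1}\le C\big(\eta^5t^5m^{2-7\alpha}\rho^5+\eta^3t^3m^{2-5\alpha-2\beta}\rho^3+\eta^2t^2m^{2-4\alpha-3\beta}\rho^2+\eta^2t^2m^{1-4\alpha-2\beta}\|f\|_{\mathcal{F}}\rho^2+\eta t m^{2-3\alpha-4\beta}\rho+m^{2-2\alpha-5\beta}+m^{1-2\alpha-4\beta}\|f\|_{\mathcal{F}}\big)$.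
   Context: Fix an integer $d\ge1$ and let $\Gamma=\{{\bm x}\in\mathbb{R}^d:\|{\bm x}\|_2\le1\}$. Fix exponents $\alpha,\beta\ge0$ and a width $m\in\mathbb{N}^+$. Random initialization: for $i=1,\dots,m$, independently, $a_i^{(0)}\sim\mathcal{U}(-m^{-\alpha},m^{-\alpha})$, ${\bm w}_i^{(0)}\in\mathbb{R}^d$ has i.i.d. coordinates $\sim\mathcal{U}(-m^{-\beta},m^{-\beta})$, and $b_i^{(0)}\sim\mathcal{U}(-m^{-\beta},m^{-\beta})$. Let $\Lambda:=[-m^{-\alpha},m^{-\alpha}]\times[-m^{-\beta},m^{-\beta}]^d\times[-m^{-\beta},m^{-\beta}]$, $p(\theta)=|\Lambda|^{-1}\mathbb{I}_{\theta\in\Lambda}$. For $\theta=(a,{\bm w},b)\in\Lambda$, ${\bm x}\in\Gamma$: ${\bm\zeta}({\bm x};\theta)=a\big(2d({\bm w}^\top{\bm x}+b)^2+12({\bm w}^\top{\bm x})({\bm w}^\top{\bm x}+b)+6({\bm w}^\top{\bm w})(\|{\bm x}\|_2^2-1)\big){\bm x}\,\mathbb{I}_{{\bm w}^\top{\bm x}+b\ge0}$. $\mathcal{F}$ is the class of $f:\Gamma\to\mathbb{R}$ with $f({\bm x})=\int_\Lambda{\bm\alpha}(\theta)^\top{\bm\zeta}({\bm x};\theta)\,{\rm d}\theta$ for some ${\bm\alpha}:\Lambda\to\mathbb{R}^d$, normed by $\|f\|_{\mathcal{F}}:=\inf_{{\bm\alpha}}\max_{\theta\in\Lambda}\|{\bm\alpha}(\theta)\|_2/p(\theta)$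 (infimum assumed attained). PINN: for $W=[{\bm w}_1~\dots~{\bm w}_m]$, ${\bm w}_i\in\mathbb{R}^d$ (only the ${\bm w}_i$ are trainable; $a_i^{(0)},b_i^{(0)}$ stay fixed), $$\psi({\bm x};W)=\sum_{i=1}^m a_i^{(0)}\Big(2d({\bm w}_i^\top{\bm x}+b_i^{(0)})^3+12({\bm w}_i^\top{\bm x}+b_i^{(0)})^2({\bm w}_i^\top{\bm x})+6({\bm w}_i^\top{\bm x}+b_i^{(0)})({\bm w}_i^\top{\bm w}_i)(\|{\bm x}\|_2^2-1)\Big)\mathbb{I}_{{\bm w}_i^\top{\bm x}+b_i^{(0)}\ge0}$$ (this is $\Delta[(\|{\bm x}\|_2^2-1)\sum_i a_i^{(0)}\sigma({\bm w}_i^\top{\bm x}+b_i^{(0)})]$ with $\sigma(s)=\max(0,s)^3$). Pseudo network: $$g({\bm x};W)=\sum_{i=1}^m a_i^{(0)}({\bm w}_i^\top{\bm x}+b_i^{(0)})\Big(2d({{\bm w}_i^{(0)}}^\top{\bm x}+b_i^{(0)})^2+12({{\bm w}_i^{(0)}}^\top{\bm x})({{\bm w}_i^{(0)}}^\top{\bm x}+b_i^{(0)})+6({{\bm w}_i^{(0)}}^\top{\bm w}_i^{(0)})(\|{\bm x}\|_2^2-1)\Big)\mathbb{I}_{{{\bm w}_i^{(0)}}^\top{\bm x}+b_i^{(0)}\ge0}.$$ Loss: $\mathcal{L}(h({\bm x})):=|h({\bm x})-f({\bm x})|^2$. SGD: training set $X=\{{\bm x}_1,\dots,{\bm x}_N\}\subset\Gamma$;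 $W^{(0)}=[{\bm w}_1^{(0)}~\dots~{\bm w}_m^{(0)}]$; for $t=1,\dots,T$, pick ${\bm x}^{(t)}$ uniformly from $X$ and set $W^{(t)}=W^{(t-1)}-\eta\nabla_W\mathcal{L}(\psi({\bm x}^{(t)};W^{(t-1)}))$, with learning rate $\eta>0$; $W_t:=W^{(t)}-W^{(0)}$, and ${\bm w}_i^{(t)}$ is the $i$-th column of $W^{(t)}$. Norm: $\|W\|_{2,1}=\sum_i\|{\bm w}_i\|_2$. No-explosion assumption: there is a constant $K\ge1$, independent of $m,\eta,t,T,N$, such that $\|{\bm w}_i^{(t)}\|_2\le K$ and $|\psi({\bm x};W^{(t)})|\le K$ for all $i$, all $t\in\{0,\dots,T\}$ and all ${\bm x}\in\Gamma$. *)

theory Defs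
  imports "HOL-Analysis.Analysis"
begin

definition Gam :: "(real^'d::finite) set" where
  "Gam = cball 0 1"

definition Lam :: "nat \<Rightarrow> real \<Rightarrow> real \<Rightarrow> (real \<times> (real^'d::finite) \<times> real) set" where
  "Lam m al be = {(a, w, b). \<bar>a\<bar> \<le> real m powr (-al) \<and>
      (\<forall>j. \<bar>w $ j\<bar> \<le> real m powr (-be)) \<and> \<bar>b\<bar> \<le> real m powr (-be)}"

definition pdens :: "nat \<Rightarrow> real \<Rightarrow> real \<Rightarrow> (real \<times> (real^'d::finite) \<times> real) \<Rightarrow> real" where
  "pdens m al be \<theta> = (if \<theta> \<in> Lam m al be
     then 1 / ((2 * real m powr (-al)) * (2 * real m powr (-be)) ^ (CARD('d) + 1)) else 0)"

definition zeta :: "real^'d::finite \<Rightarrow> (real \<times> (real^'d) \<times> real) \<Rightarrow> real^'d" where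
  "zeta x \<theta> = (case \<theta> of (a, w, b) \<Rightarrow>
     (a * (2 * real CARD('d) * (w \<bullet> x + b)^2 + 12 * (w \<bullet> x) * (w \<bullet> x + b)
          + 6 * (w \<bullet> w) * ((norm x)^2 - 1))
        * (if w \<bullet> x + b \<ge> 0 then 1 else 0)) *\<^sub>R x)"

text \<open>Admissible representations alpha of f (bounded, so the max of |alpha|/p is finite).\<close>
definition reps :: "nat \<Rightarrow> real \<Rightarrow> real \<Rightarrow> (real^'d::finite \<Rightarrow> real)
     \<Rightarrow> ((real \<times> (real^'d) \<times> real) \<Rightarrow> real^'d) set" where
  "reps m al be f = {A. bounded (A ` Lam m al be) \<and>
      (\<forall>x\<in>Gam. ((\<lambda>\<theta>. A \<theta> \<bullet> zeta x \<theta>) has_integral f x) (Lam m al be))}"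

definition repnorm :: "nat \<Rightarrow> real \<Rightarrow> real \<Rightarrow> ((real \<times> (real^'d::finite) \<times> real) \<Rightarrow> real^'d) \<Rightarrow> real" where
  "repnorm m al be A = (SUP \<theta>\<in>Lam m al be. norm (A \<theta>) / pdens m al be \<theta>)"

definition inF :: "nat \<Rightarrow> real \<Rightarrow> real \<Rightarrow> (real^'d::finite \<Rightarrow> real) \<Rightarrow> bool" where
  "inF m al be f \<longleftrightarrow> reps m al be f \<noteq> {}"

definition Fnorm :: "nat \<Rightarrow> real \<Rightarrow> real \<Rightarrow> (real^'d::finite \<Rightarrow> real) \<Rightarrow> real" where
  "Fnorm m al be f = Inf (repnorm m al be ` reps m al be f)"

definition psi :: "nat \<Rightarrow> (nat \<Rightarrow> real) \<Rightarrow> (nat \<Rightarrow> real) \<Rightarrow> (nat \<Rightarrow> real^'d::finite) \<Rightarrow> real^'d \<Rightarrow> real" where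
  "psi m a b W x = (\<Sum>i\<in>{1..m}. a i *
     (2 * real CARD('d) * (W i \<bullet> x + b i)^3 + 12 * (W i \<bullet> x + b i)^2 * (W i \<bullet> x)
      + 6 * (W i \<bullet> x + b i) * (W i \<bullet> W i) * ((norm x)^2 - 1))
     * (if W i \<bullet> x + b i \<ge> 0 then 1 else 0))"

text \<open>Pseudo network g(x;W) (linearisation at W0).\<close>
definition pseudo :: "nat \<Rightarrow> (nat \<Rightarrow> real) \<Rightarrow> (nat \<Rightarrow> real) \<Rightarrow> (nat \<Rightarrow> real^'d::finite)
     \<Rightarrow> (nat \<Rightarrow> real^'d) \<Rightarrow> real^'d \<Rightarrow> real" where
  "pseudo m a b W0 W x = (\<Sum>i\<in>{1..m}. a i * (W i \<bullet> x + b i) *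
     (2 * real CARD('d) * (W0 i \<bullet> x + b i)^2 + 12 * (W0 i \<bullet> x) * (W0 i \<bullet> x + b i)
      + 6 * (W0 i \<bullet> W0 i) * ((norm x)^2 - 1))
     * (if W0 i \<bullet> x + b i \<ge> 0 then 1 else 0))"

text \<open>Gradient w.r.t. w_i of L(psi(x;W)) = |psi(x;W) - f(x)|^2, computed by the chain rule
  with the indicator treated as locally constant (the standard convention).\<close>
definition grad_psi :: "nat \<Rightarrow> (nat \<Rightarrow> real) \<Rightarrow> (nat \<Rightarrow> real) \<Rightarrow> (real^'d::finite \<Rightarrow> real)
     \<Rightarrow> (nat \<Rightarrow> real^'d) \<Rightarrow> real^'d \<Rightarrow> nat \<Rightarrow> real^'d" where
  "grad_psi m a b f W x i =
     (let s = W i \<bullet> x + b i; u = W i \<bullet> x; q = W i \<bullet> W i; r = (norm x)^2 - 1 in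
      (2 * (psi m a b W x - f x) * a i * (if s \<ge> 0 then 1 else 0)) *\<^sub>R
        ((6 * real CARD('d) * s^2 + 24 * s * u + 12 * s^2 + 6 * q * r) *\<^sub>R x + (12 * s * r) *\<^sub>R W i))"

text \<open>Gradient w.r.t. w_i of L(g(x;W)) = |g(x;W) - f(x)|^2 (g is linear in W).\<close>
definition grad_pseudo :: "nat \<Rightarrow> (nat \<Rightarrow> real) \<Rightarrow> (nat \<Rightarrow> real) \<Rightarrow> (real^'d::finite \<Rightarrow> real)
     \<Rightarrow> (nat \<Rightarrow> real^'d) \<Rightarrow> (nat \<Rightarrow> real^'d) \<Rightarrow> real^'d \<Rightarrow> nat \<Rightarrow> real^'d" where
  "grad_pseudo m a b f W0 W x i =
     (2 * (pseudo m a b W0 W x - f x) * a i *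
       (2 * real CARD('d) * (W0 i \<bullet> x + b i)^2 + 12 * (W0 i \<bullet> x) * (W0 i \<bullet> x + b i)
        + 6 * (W0 i \<bullet> W0 i) * ((norm x)^2 - 1))
       * (if W0 i \<bullet> x + b i \<ge> 0 then 1 else 0)) *\<^sub>R x"

definition norm21 :: "nat \<Rightarrow> (nat \<Rightarrow> real^'d::finite) \<Rightarrow> real" where
  "norm21 m V = (\<Sum>i\<in>{1..m}. norm (V i))"

end

theory Submission
  imports Defs
begin


lemma Lam_cbox:
  "Lam m al be = cbox (- (real m powr -al), - (\<chi> j. real m powr -be) :: real^'d::finite, - (real m powr -be))
                      (real m powr -al, (\<chi> j. real m powr -be), real m powr -be)"
  unfolding Lam_def cbox_Pair_eq
  by (auto simp: mem_box_cart abs_le_iff cbox_interval less_eq_vec_def; meson minus_le_iff)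

lemma Lam_content:
  assumes "m \<ge> 1"
  shows "measure lborel (Lam m al be :: (real \<times> (real^'d::finite) \<times> real) set)
     = (2 * real m powr (-al)) * (2 * real m powr (-be)) ^ (CARD('d) + 1)"
proof -
  have ne: "cbox (- (\<chi> j. real m powr -be)) (\<chi> j. real m powr -be :: real^'d) \<noteq> {}"
  proof -
    have "(0::real^'d) \<in> cbox (- (\<chi> j. real m powr -be)) (\<chi> j. real m powr -be)"
      by (simp add: mem_box_cart)
    then show ?thesis by blast
  qed
  show ?thesis
    unfolding Lam_cbox content_Pair content_cbox_cart[OF ne]
    by (simp add: cbox_interval)
qed

lemma nw_bound:
  fixes w :: "real^'d::finite"
  assumes "\<forall>j. \<bar>w $ j\<bar> \<le> e"
  shows "norm w \<le> real CARD('d) * e"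
proof -
  have "norm w \<le> (\<Sum>j\<in>UNIV. \<bar>w $ j\<bar>)" by (rule norm_le_l1_cart)
  also have "\<dots> \<le> real (card (UNIV::'d set)) * e"
    by (rule sum_bounded_above) (use assms in auto)
  finally show ?thesis by simp
qed

lemma prod_abs_le:
  fixes x y X Y :: real
  assumes "\<bar>x\<bar> \<le> X" "\<bar>y\<bar> \<le> Y"
  shows "\<bar>x * y\<bar> \<le> X * Y"
  unfolding abs_mult using assms by (intro mult_mono) auto

lemma coef2:
  fixes n s u q r L :: real
  assumes "n \<ge> 0" "\<bar>s\<bar> \<le> L" "\<bar>u\<bar> \<le> L" "\<bar>q\<bar> \<le> L^2" "\<bar>r\<bar> \<le> 1"
  shows "\<bar>2*n* s^2 + 12*u* s + 6*q*r\<bar> \<le> (2*n+18)*L^2"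
proof -
  have L: "L \<ge> 0" using assms(2) by linarith
  have h1: "\<bar>s^2\<bar> \<le> L^2" unfolding power2_eq_square by (rule prod_abs_le) (use assms in auto)
  have h2: "\<bar>u* s\<bar> \<le> L^2" unfolding power2_eq_square by (rule prod_abs_le) (use assms in auto)
  have h3: "\<bar>q*r\<bar> \<le> L^2*1" by (rule prod_abs_le) (use assms in auto)
  have h1': "\<bar>(2*n)* s^2\<bar> \<le> (2*n)*L^2" using h1 assms(1) by (simp add: abs_mult mult_left_mono)
  have h2': "\<bar>12*(u* s)\<bar> \<le> 12*L^2" using h2 by (simp add: abs_mult)
  have h3': "\<bar>6*(q*r)\<bar> \<le> 6*L^2" using h3 by (simp add: abs_mult)
  have eq: "2*n * s^2 + 12*u * s + 6*q*r = (2*n) * s^2 + 12*(u * s) + 6*(q*r)" by simp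
  show ?thesis unfolding eq
    using h1' h2' h3' abs_triangle_ineq[of "(2*n) * s^2 + 12*(u * s)" "6*(q*r)"]
      abs_triangle_ineq[of "(2*n) * s^2" "12*(u * s)"] by (simp add: distrib_right)
qed

lemma coef3:
  fixes n s u q r L :: real
  assumes "n \<ge> 0" "\<bar>s\<bar> \<le> L" "\<bar>u\<bar> \<le> L" "\<bar>q\<bar> \<le> L^2" "\<bar>r\<bar> \<le> 1"
  shows "\<bar>2*n* s^3 + 12* s^2*u + 6* s*q*r\<bar> \<le> (2*n+18)*L^3"
proof -
  have "\<bar>s * (2*n* s^2 + 12*u* s + 6*q*r)\<bar> \<le> L * ((2*n+18)*L^2)"
    by (rule prod_abs_le) (use assms coef2 in auto)
  then show ?thesis by (simp add: algebra_simps power2_eq_square power3_eq_cube)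
qed

lemma Gam_norm: "x \<in> Gam \<Longrightarrow> norm x \<le> 1"
  by (simp add: Gam_def)

lemma r_bound: "norm (x::'a::real_normed_vector) \<le> 1 \<Longrightarrow> \<bar>(norm x)^2 - 1\<bar> \<le> 1"
proof -
  assume "norm x \<le> 1"
  then have "(norm x)^2 \<le> 1" by (simp add: power_le_one)
  then show ?thesis by simp
qed

lemma zeta_bound:
  fixes x :: "real^'d::finite"
  assumes "(a, w, bb) \<in> Lam m al be" "x \<in> Gam"
  shows "norm (zeta x (a, w, bb)) \<le> (2 * real CARD('d) + 18) * ((real CARD('d) + 1) * real m powr -be)^2 * real m powr -al"
proof -
  define n where "n = real CARD('d)"
  define e where "e = real m powr -be"
  define E where "E = (n + 1) * e"
  have e0: "e \<ge> 0" unfolding e_def by simp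
  have x1: "norm x \<le> 1" using assms(2) by (rule Gam_norm)
  have wj: "\<forall>j. \<bar>w $ j\<bar> \<le> e" and bb: "\<bar>bb\<bar> \<le> e" and aa: "\<bar>a\<bar> \<le> real m powr -al"
    using assms(1) by (auto simp: Lam_def e_def)
  have nw: "norm w \<le> n * e" using nw_bound[OF wj] by (simp add: n_def)
  have E0: "E \<ge> 0" unfolding E_def n_def using e0 by simp
  have nwE: "norm w \<le> E" using nw e0 unfolding E_def by (simp add: algebra_simps)
  have u: "\<bar>w \<bullet> x\<bar> \<le> E"
  proof -
    have "\<bar>w \<bullet> x\<bar> \<le> norm w * norm x" by (rule Cauchy_Schwarz_ineq2)
    also have "\<dots> \<le> E * 1" using nwE x1 E0 by (intro mult_mono) auto
    finally show ?thesis by simp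
  qed
  have s: "\<bar>w \<bullet> x + bb\<bar> \<le> E"
  proof -
    have "\<bar>w \<bullet> x\<bar> \<le> n * e"
      using Cauchy_Schwarz_ineq2[of w x] nw x1 mult_mono[of "norm w" "n*e" "norm x" 1] e0
      by (simp add: n_def) 
    then show ?thesis using bb unfolding E_def by (simp add: algebra_simps abs_le_iff)
  qed
  have q: "\<bar>w \<bullet> w\<bar> \<le> E^2"
  proof -
    have "\<bar>w \<bullet> w\<bar> = (norm w)^2" by (simp add: power2_norm_eq_inner)
    also have "\<dots> \<le> E^2" using nwE by (intro power_mono) auto
    finally show ?thesis .
  qed
  have c: "\<bar>2 * n * (w \<bullet> x + bb)^2 + 12 * (w \<bullet> x) * (w \<bullet> x + bb) + 6 * (w \<bullet> w) * ((norm x)^2 - 1)\<bar>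
      \<le> (2*n+18) * E^2"
    by (rule coef2) (use s u q r_bound[OF x1] in \<open>auto simp: n_def\<close>)
  have "norm (zeta x (a, w, bb)) = \<bar>a\<bar> * \<bar>2 * n * (w \<bullet> x + bb)^2 + 12 * (w \<bullet> x) * (w \<bullet> x + bb) + 6 * (w \<bullet> w) * ((norm x)^2 - 1)\<bar>
      * (if w \<bullet> x + bb \<ge> 0 then 1 else 0) * norm x"
    by (simp add: zeta_def n_def abs_mult)
  also have "\<dots> \<le> real m powr -al * ((2*n+18) * E^2) * 1 * 1"
    using aa c x1 by (intro mult_mono) auto
  finally show ?thesis by (simp add: E_def n_def e_def algebra_simps)
qed

lemma f_bound:
  fixes f :: "real^'d::finite \<Rightarrow> real"
  assumes A: "A \<in> reps m al be f" and m1: "m \<ge> 1" and x: "x \<in> Gam"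
  shows "\<bar>f x\<bar> \<le> repnorm m al be A * ((2 * real CARD('d) + 18) * ((real CARD('d) + 1) * real m powr -be)^2 * real m powr -al)"
    and "0 \<le> repnorm m al be A"
proof -
  define Z where "Z = (2 * real CARD('d) + 18) * ((real CARD('d) + 1) * real m powr -be)^2 * real m powr -al"
  define p0 where "p0 = 1 / ((2 * real m powr (-al)) * (2 * real m powr (-be)) ^ (CARD('d) + 1))"
  have p0: "p0 > 0" unfolding p0_def using m1 by simp
  have pd: "\<And>\<theta>::real \<times> (real^'d) \<times> real. \<theta> \<in> Lam m al be \<Longrightarrow> pdens m al be \<theta> = p0" by (simp add: pdens_def p0_def)
  have cont: "p0 * measure lborel (Lam m al be :: (real \<times> (real^'d) \<times> real) set) = 1"
    unfolding Lam_content[OF m1] p0_def using m1 by simp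
  have bA: "bounded (A ` Lam m al be)" and hi: "((\<lambda>\<theta>. A \<theta> \<bullet> zeta x \<theta>) has_integral f x) (Lam m al be)"
    using A x by (auto simp: reps_def)
  obtain B where B: "\<And>\<theta>. \<theta> \<in> Lam m al be \<Longrightarrow> norm (A \<theta>) \<le> B"
    using bA by (auto simp: bounded_iff)
  have bdd: "bdd_above ((\<lambda>\<theta>. norm (A \<theta>) / pdens m al be \<theta>) ` Lam m al be)"
  proof (rule bdd_aboveI2)
    fix \<theta> :: "real \<times> (real^'d) \<times> real" assume "\<theta> \<in> Lam m al be"
    then show "norm (A \<theta>) / pdens m al be \<theta> \<le> B / p0"
      using B[of \<theta>] p0 unfolding pd[OF \<open>\<theta> \<in> Lam m al be\<close>] by (intro divide_right_mono) auto
  qed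
  have up: "\<And>\<theta>::real \<times> (real^'d) \<times> real. \<theta> \<in> Lam m al be \<Longrightarrow> norm (A \<theta>) \<le> repnorm m al be A * p0"
  proof -
    fix \<theta> :: "real \<times> (real^'d) \<times> real" assume th: "\<theta> \<in> Lam m al be"
    have "norm (A \<theta>) / pdens m al be \<theta> \<le> repnorm m al be A"
      unfolding repnorm_def by (rule cSUP_upper[OF th bdd])
    then show "norm (A \<theta>) \<le> repnorm m al be A * p0" unfolding pd[OF th] pos_divide_le_eq[OF p0] .
  qed
  have z0: "(0, 0, 0) \<in> (Lam m al be :: (real \<times> (real^'d) \<times> real) set)" by (simp add: Lam_def)
  show rn0: "0 \<le> repnorm m al be A"
  proof -
    have "0 \<le> repnorm m al be A * p0" using up[OF z0] norm_ge_zero[of "A (0,0,0)"] by linarith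
    then show ?thesis using p0 by (simp add: zero_le_mult_iff)
  qed
  have Z0: "Z \<ge> 0" unfolding Z_def by simp
  have nb: "norm (f x) \<le> (repnorm m al be A * p0 * Z) * measure lborel (Lam m al be :: (real \<times> (real^'d) \<times> real) set)"
    unfolding Lam_cbox
  proof (rule has_integral_bound[where f="\<lambda>\<theta>. A \<theta> \<bullet> zeta x \<theta>"])
    show "0 \<le> repnorm m al be A * p0 * Z" using rn0 p0 Z0 by simp
    show "((\<lambda>\<theta>. A \<theta> \<bullet> zeta x \<theta>) has_integral f x) (cbox (- (real m powr -al), - (\<chi> j. real m powr -be), - (real m powr -be))
                      (real m powr -al, (\<chi> j. real m powr -be), real m powr -be))" using hi unfolding Lam_cbox .
  next
    fix \<theta> :: "real \<times> (real^'d) \<times> real"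
    assume "\<theta> \<in> cbox (- (real m powr -al), - (\<chi> j. real m powr -be), - (real m powr -be))
                      (real m powr -al, (\<chi> j. real m powr -be), real m powr -be)"
    then have th: "\<theta> \<in> Lam m al be" unfolding Lam_cbox .
    obtain a w bb where tt: "\<theta> = (a, w, bb)" by (cases \<theta>) auto
    have "norm (A \<theta> \<bullet> zeta x \<theta>) \<le> norm (A \<theta>) * norm (zeta x \<theta>)"
      by (simp add: Cauchy_Schwarz_ineq2)
    also have "\<dots> \<le> (repnorm m al be A * p0) * Z"
      using up[OF th] zeta_bound[of a w bb m al be x] th x rn0 p0 unfolding tt Z_def
      by (intro mult_mono) auto
    finally show "norm (A \<theta> \<bullet> zeta x \<theta>) \<le> repnorm m al be A * p0 * Z" .
  qed
  note nb
  also have "\<dots> = repnorm m al be A * Z" using cont by (simp add: algebra_simps)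
  finally show "\<bar>f x\<bar> \<le> repnorm m al be A * Z" by simp
qed

lemma gcoef:
  fixes n s u q r L :: real
  assumes "n \<ge> 0" "\<bar>s\<bar> \<le> L" "\<bar>u\<bar> \<le> L" "\<bar>q\<bar> \<le> L^2" "\<bar>r\<bar> \<le> 1"
  shows "\<bar>6 * n * s^2 + 24 * s * u + 12 * s^2 + 6 * q * r\<bar> \<le> (6*n+42)*L^2"
proof -
  have h1: "\<bar>s^2\<bar> \<le> L^2" unfolding power2_eq_square by (rule prod_abs_le) (use assms in auto)
  have h2: "\<bar>s * u\<bar> \<le> L^2" unfolding power2_eq_square by (rule prod_abs_le) (use assms in auto)
  have h3: "\<bar>q * r\<bar> \<le> L^2*1" by (rule prod_abs_le) (use assms in auto)
  have h1': "\<bar>(6*n) * s^2\<bar> \<le> (6*n)*L^2" using h1 assms(1) by (simp add: abs_mult mult_left_mono)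
  have h2': "\<bar>24*(s * u)\<bar> \<le> 24*L^2" using h2 by (simp add: abs_mult)
  have h4': "\<bar>12*(s^2)\<bar> \<le> 12*L^2" using h1 by (simp add: abs_mult)
  have h3': "\<bar>6*(q*r)\<bar> \<le> 6*L^2" using h3 by (simp add: abs_mult)
  have eq: "6 * n * s^2 + 24 * s * u + 12 * s^2 + 6 * q * r = (6*n) * s^2 + 24*(s * u) + 12*(s^2) + 6*(q*r)" by simp
  show ?thesis unfolding eq
    using h1' h2' h3' h4' abs_triangle_ineq[of "(6*n) * s^2 + 24*(s * u) + 12*(s^2)" "6*(q*r)"]
      abs_triangle_ineq[of "(6*n) * s^2 + 24*(s * u)" "12*(s^2)"]
      abs_triangle_ineq[of "(6*n) * s^2" "24*(s * u)"] by (simp add: distrib_right)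
qed

lemma gvec:
  fixes n s u q r L :: real and x w :: "real^'d::finite"
  assumes "n \<ge> 0" "\<bar>s\<bar> \<le> L" "\<bar>u\<bar> \<le> L" "\<bar>q\<bar> \<le> L^2" "\<bar>r\<bar> \<le> 1" "norm x \<le> 1" "norm w \<le> L"
  shows "norm ((6 * n * s^2 + 24 * s * u + 12 * s^2 + 6 * q * r) *\<^sub>R x + (12 * s * r) *\<^sub>R w) \<le> (6*n+54)*L^2"
proof -
  have L: "L \<ge> 0" using assms(2) by linarith
  have a: "norm ((6 * n * s^2 + 24 * s * u + 12 * s^2 + 6 * q * r) *\<^sub>R x) \<le> ((6*n+42)*L^2) * 1"
    unfolding norm_scaleR by (rule mult_mono) (use gcoef[OF assms(1-5)] assms(6) in auto)
  have b0: "\<bar>12 * s * r\<bar> \<le> (12*L) * 1" unfolding abs_mult using assms(2,5) L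
    by (intro mult_mono) auto
  have b: "norm ((12 * s * r) *\<^sub>R w) \<le> ((12*L) * 1) * L"
    unfolding norm_scaleR by (rule mult_mono) (use b0 assms(7) L in auto)
  show ?thesis using norm_triangle_ineq[of "(6 * n * s^2 + 24 * s * u + 12 * s^2 + 6 * q * r) *\<^sub>R x" "(12 * s * r) *\<^sub>R w"] a b
    by (simp add: power2_eq_square algebra_simps)
qed

lemma neuron_scalar:
  fixes n s s0 u u0 q q0 r E d :: real
  assumes n: "n \<ge> 0" and E: "E \<ge> 0" and ds: "\<bar>s - s0\<bar> \<le> d" and du: "\<bar>u - u0\<bar> \<le> d"
    and dq: "\<bar>q - q0\<bar> \<le> d * (2*E + d)" and s0: "\<bar>s0\<bar> \<le> E" and u0: "\<bar>u0\<bar> \<le> E"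
    and q0: "\<bar>q0\<bar> \<le> E^2" and r: "\<bar>r\<bar> \<le> 1"
  shows "\<bar>(2 * n * s^3 + 12 * s^2 * u + 6 * s * q * r) * (if s \<ge> 0 then 1 else 0)
          - s * (2 * n * s0^2 + 12 * u0 * s0 + 6 * q0 * r) * (if s0 \<ge> 0 then 1 else 0)\<bar>
         \<le> (4*n+36) * d * (E + d)^2"
proof -
  define L where "L = E + d"
  have d0: "d \<ge> 0" using ds by linarith
  have L0: "L \<ge> 0" using d0 E by (simp add: L_def)
  have sL: "\<bar>s\<bar> \<le> L" using ds s0 unfolding L_def abs_le_iff by linarith
  have uL: "\<bar>u\<bar> \<le> L" using du u0 unfolding L_def abs_le_iff by linarith
  have qL: "\<bar>q\<bar> \<le> L^2"
  proof -
    have "\<bar>q\<bar> \<le> \<bar>q0\<bar> + \<bar>q - q0\<bar>" by linarith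
    also have "\<dots> \<le> E^2 + d * (2*E + d)" using q0 dq by linarith
    also have "\<dots> = L^2" by (simp add: L_def power2_eq_square algebra_simps)
    finally show ?thesis .
  qed
  have EL: "E \<le> L" using d0 by (simp add: L_def)
  have E2L: "E^2 \<le> L^2" using EL E by (intro power_mono) auto
  have c0: "\<bar>2 * n * s0^2 + 12 * u0 * s0 + 6 * q0 * r\<bar> \<le> (2*n+18) * E^2"
    by (rule coef2) (use n s0 u0 q0 r in auto)
  have c1: "\<bar>2 * n * s^2 + 12 * u * s + 6 * q * r\<bar> \<le> (2*n+18) * L^2"
    by (rule coef2) (use n sL uL qL r in auto)
  have key: "(2*n+18) * d * L^2 \<le> (4*n+36) * d * L^2"
    using n d0 L0 by (intro mult_right_mono) auto
  consider (on) "s \<ge> 0" "s0 \<ge> 0" | (p) "s \<ge> 0" "s0 < 0" | (q) "s < 0" "s0 \<ge> 0" | (off) "s < 0" "s0 < 0"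
    by linarith
  then have "\<bar>(2 * n * s^3 + 12 * s^2 * u + 6 * s * q * r) * (if s \<ge> 0 then 1 else 0)
          - s * (2 * n * s0^2 + 12 * u0 * s0 + 6 * q0 * r) * (if s0 \<ge> 0 then 1 else 0)\<bar>
         \<le> (4*n+36) * d * L^2"
  proof cases
    case on
    have eq: "(2 * n * s^3 + 12 * s^2 * u + 6 * s * q * r) - s * (2 * n * s0^2 + 12 * u0 * s0 + 6 * q0 * r)
      = (2*n) * (s * ((s - s0) * (s + s0))) + 12 * (s * ((s - s0) * u + s0 * (u - u0))) + 6 * (r * (s * (q - q0)))"
      by (simp add: algebra_simps power2_eq_square power3_eq_cube)
    have sp: "\<bar>s + s0\<bar> \<le> 2 * L" using sL s0 EL unfolding abs_le_iff by linarith
    have t1a: "\<bar>s * ((s - s0) * (s + s0))\<bar> \<le> L * (d * (2*L))"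
      by (intro prod_abs_le sp ds sL)
    have t1: "\<bar>(2*n) * (s * ((s - s0) * (s + s0)))\<bar> \<le> (2*n) * (L * (d * (2*L)))"
    proof -
      have "(2*n) * \<bar>s * ((s - s0) * (s + s0))\<bar> \<le> (2*n) * (L * (d * (2*L)))"
        by (rule mult_left_mono[OF t1a]) (use n in simp)
      moreover have "\<bar>(2*n) * (s * ((s - s0) * (s + s0)))\<bar> = (2*n) * \<bar>s * ((s - s0) * (s + s0))\<bar>"
        using n by (simp add: abs_mult)
      ultimately show ?thesis by simp
    qed
    have t2a: "\<bar>(s - s0) * u\<bar> \<le> d * L" by (intro prod_abs_le ds uL)
    have t2b: "\<bar>s0 * (u - u0)\<bar> \<le> E * d" by (intro prod_abs_le du s0)
    have t2c: "\<bar>(s - s0) * u + s0 * (u - u0)\<bar> \<le> d * L + E * d" using t2a t2b by linarith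
    have t2d: "\<bar>s * ((s - s0) * u + s0 * (u - u0))\<bar> \<le> L * (d * L + E * d)" by (intro prod_abs_le t2c sL)
    have t2e: "L * (d * L + E * d) \<le> L * (d * L + L * d)"
      using L0 d0 EL by (intro mult_left_mono add_left_mono mult_right_mono) auto
    have t2: "\<bar>12 * (s * ((s - s0) * u + s0 * (u - u0)))\<bar> \<le> 12 * (L * (d * L + L * d))"
      using t2d t2e by (simp add: abs_mult)
    have dq': "\<bar>q - q0\<bar> \<le> d * (2 * L)"
    proof -
      have "d * (2*E + d) \<le> d * (2 * L)" using d0 E by (intro mult_left_mono) (auto simp: L_def)
      then show ?thesis using dq by linarith
    qed
    have t3a: "\<bar>s * (q - q0)\<bar> \<le> L * (d * (2*L))" by (intro prod_abs_le dq' sL)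
    have t3b: "\<bar>r * (s * (q - q0))\<bar> \<le> 1 * (L * (d * (2*L)))" by (intro prod_abs_le t3a r)
    have t3: "\<bar>6 * (r * (s * (q - q0)))\<bar> \<le> 6 * (L * (d * (2*L)))" using t3b by (simp only: abs_mult abs_numeral mult_1_left)
    have "\<bar>(2*n) * (s * ((s - s0) * (s + s0))) + 12 * (s * ((s - s0) * u + s0 * (u - u0))) + 6 * (r * (s * (q - q0)))\<bar>
       \<le> (2*n) * (L * (d * (2*L))) + 12 * (L * (d * L + L * d)) + 6 * (L * (d * (2*L)))"
      using t1 t2 t3 abs_triangle_ineq[of "(2*n) * (s * ((s - s0) * (s + s0))) + 12 * (s * ((s - s0) * u + s0 * (u - u0)))" "6 * (r * (s * (q - q0)))"]
        abs_triangle_ineq[of "(2*n) * (s * ((s - s0) * (s + s0)))" "12 * (s * ((s - s0) * u + s0 * (u - u0)))"]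
      by linarith
    also have "\<dots> = (4*n+36) * d * L^2" by (simp add: algebra_simps power2_eq_square)
    finally show ?thesis using on eq by simp
  next
    case p
    have sd: "\<bar>s\<bar> \<le> d" using p ds unfolding abs_le_iff by linarith
    have eq: "2 * n * s^3 + 12 * s^2 * u + 6 * s * q * r = s * (2 * n * s^2 + 12 * u * s + 6 * q * r)"
      by (simp add: algebra_simps power2_eq_square power3_eq_cube)
    have "\<bar>s * (2 * n * s^2 + 12 * u * s + 6 * q * r)\<bar> \<le> d * ((2*n+18) * L^2)"
      by (intro prod_abs_le sd c1)
    then show ?thesis using p eq key by (simp add: algebra_simps)
  next
    case q
    have sd: "\<bar>s\<bar> \<le> d" using q ds s0 unfolding abs_le_iff by linarith
    have c0': "\<bar>2 * n * s0^2 + 12 * u0 * s0 + 6 * q0 * r\<bar> \<le> (2*n+18) * L^2"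
      using c0 E2L n by (meson order_trans mult_left_mono add_nonneg_nonneg mult_nonneg_nonneg zero_le_numeral)
    have "\<bar>s * (2 * n * s0^2 + 12 * u0 * s0 + 6 * q0 * r)\<bar> \<le> d * ((2*n+18) * L^2)"
      by (intro prod_abs_le sd c0')
    then show ?thesis using q key by (simp add: algebra_simps)
  next
    case off
    then show ?thesis using d0 L0 n by simp
  qed
  then show ?thesis by (simp add: L_def)
qed

lemma powr_split:
  fixes M al be :: real
  assumes "M > 0"
  shows "M powr (real c - real k1 * al - real k2 * be) = M^c * (M powr -al)^k1 * (M powr -be)^k2"
proof -
  have "M powr (real c - real k1 * al - real k2 * be) = M powr (real c) * M powr (real k1 * -al) * M powr (real k2 * -be)"
    by (simp add: powr_add[symmetric] algebra_simps)
  also have "\<dots> = M^c * (M powr -al)^k1 * (M powr -be)^k2"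
    using assms by (simp add: powr_power powr_realpow)
  finally show ?thesis .
qed

lemma geom:
  fixes w w0 x :: "real^'d::finite"
  assumes wj: "\<forall>j. \<bar>w0 $ j\<bar> \<le> e" and bb: "\<bar>bb\<bar> \<le> e" and x: "x \<in> Gam" and dw: "norm (w - w0) \<le> d"
  defines "E \<equiv> (real CARD('d) + 1) * e"
  shows "E \<ge> 0" "d \<ge> 0" "\<bar>w0 \<bullet> x + bb\<bar> \<le> E" "\<bar>w0 \<bullet> x\<bar> \<le> E" "\<bar>w0 \<bullet> w0\<bar> \<le> E^2" "norm w0 \<le> E"
    "\<bar>(w \<bullet> x + bb) - (w0 \<bullet> x + bb)\<bar> \<le> d" "\<bar>w \<bullet> x - w0 \<bullet> x\<bar> \<le> d"
    "\<bar>w \<bullet> w - w0 \<bullet> w0\<bar> \<le> d * (2*E + d)"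
    "norm w \<le> E + d" "\<bar>w \<bullet> x + bb\<bar> \<le> E + d" "\<bar>w \<bullet> x\<bar> \<le> E + d" "\<bar>w \<bullet> w\<bar> \<le> (E + d)^2"
proof -
  define n where "n = real CARD('d)"
  have e0: "e \<ge> 0" using bb by linarith
  show E0: "E \<ge> 0" unfolding E_def using e0 by simp
  show d0: "d \<ge> 0" using dw norm_ge_zero[of "w - w0"] by linarith
  have x1: "norm x \<le> 1" using x by (rule Gam_norm)
  have nw: "norm w0 \<le> n * e" using nw_bound[OF wj] by (simp add: n_def)
  show nwE: "norm w0 \<le> E" using nw e0 unfolding E_def n_def by (simp add: algebra_simps)
  have u: "\<bar>w0 \<bullet> x\<bar> \<le> n * e"
  proof -
    have "\<bar>w0 \<bullet> x\<bar> \<le> norm w0 * norm x" by (rule Cauchy_Schwarz_ineq2)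
    also have "\<dots> \<le> (n * e) * 1" using nw x1 e0 by (intro mult_mono) (auto simp: n_def)
    finally show ?thesis by simp
  qed
  show "\<bar>w0 \<bullet> x\<bar> \<le> E" using u e0 unfolding E_def n_def by (simp add: algebra_simps)
  show "\<bar>w0 \<bullet> x + bb\<bar> \<le> E" using u bb unfolding E_def n_def abs_le_iff by (simp add: algebra_simps)
  show "\<bar>w0 \<bullet> w0\<bar> \<le> E^2"
  proof -
    have "\<bar>w0 \<bullet> w0\<bar> = (norm w0)^2" by (simp add: power2_norm_eq_inner)
    also have "\<dots> \<le> E^2" using nwE by (intro power_mono) auto
    finally show ?thesis .
  qed
  have dd: "\<bar>w \<bullet> x - w0 \<bullet> x\<bar> \<le> d"
  proof -
    have "\<bar>w \<bullet> x - w0 \<bullet> x\<bar> = \<bar>(w - w0) \<bullet> x\<bar>" by (simp add: inner_diff_left)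
    also have "\<dots> \<le> norm (w - w0) * norm x" by (rule Cauchy_Schwarz_ineq2)
    also have "\<dots> \<le> d * 1" using dw x1 d0 by (intro mult_mono) auto
    finally show ?thesis by simp
  qed
  then show "\<bar>w \<bullet> x - w0 \<bullet> x\<bar> \<le> d" .
  show "\<bar>(w \<bullet> x + bb) - (w0 \<bullet> x + bb)\<bar> \<le> d" using dd by simp
  show nw1: "norm w \<le> E + d" using norm_triangle_ineq[of w0 "w - w0"] nwE dw by simp
  show "\<bar>w \<bullet> w - w0 \<bullet> w0\<bar> \<le> d * (2*E + d)"
  proof -
    have "\<bar>w \<bullet> w - w0 \<bullet> w0\<bar> = \<bar>(w - w0) \<bullet> (w + w0)\<bar>" by (simp add: algebra_simps inner_commute)
    also have "\<dots> \<le> norm (w - w0) * norm (w + w0)" by (rule Cauchy_Schwarz_ineq2)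
    also have "\<dots> \<le> d * (2*E + d)"
    proof (intro mult_mono)
      show "norm (w + w0) \<le> 2*E + d" using norm_triangle_ineq[of w w0] nw1 nwE by simp
    qed (use dw d0 in auto)
    finally show ?thesis .
  qed
  have u1: "\<bar>w \<bullet> x\<bar> \<le> E + d"
  proof -
    have "\<bar>w \<bullet> x\<bar> \<le> norm w * norm x" by (rule Cauchy_Schwarz_ineq2)
    also have "\<dots> \<le> (E + d) * 1" using nw1 x1 E0 d0 by (intro mult_mono) auto
    finally show ?thesis by simp
  qed
  then show "\<bar>w \<bullet> x\<bar> \<le> E + d" .
  show "\<bar>w \<bullet> x + bb\<bar> \<le> E + d" using dd u bb unfolding E_def n_def abs_le_iff by (simp add: algebra_simps)
  show "\<bar>w \<bullet> w\<bar> \<le> (E + d)^2"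
  proof -
    have "\<bar>w \<bullet> w\<bar> = (norm w)^2" by (simp add: power2_norm_eq_inner)
    also have "\<dots> \<le> (E + d)^2" using nw1 by (intro power_mono) auto
    finally show ?thesis .
  qed
qed

lemma neuron_b_vec:
  fixes w w0 x :: "real^'d::finite"
  assumes wj: "\<forall>j. \<bar>w0 $ j\<bar> \<le> e" and bb: "\<bar>bb\<bar> \<le> e" and x: "x \<in> Gam" and dw: "norm (w - w0) \<le> d"
    and aa: "\<bar>ai\<bar> \<le> A0"
  shows "\<bar>ai * (2 * real CARD('d) * (w \<bullet> x + bb)^3 + 12 * (w \<bullet> x + bb)^2 * (w \<bullet> x)
      + 6 * (w \<bullet> x + bb) * (w \<bullet> w) * ((norm x)^2 - 1)) * (if w \<bullet> x + bb \<ge> 0 then 1 else 0)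
    - ai * (w \<bullet> x + bb) * (2 * real CARD('d) * (w0 \<bullet> x + bb)^2 + 12 * (w0 \<bullet> x) * (w0 \<bullet> x + bb)
      + 6 * (w0 \<bullet> w0) * ((norm x)^2 - 1)) * (if w0 \<bullet> x + bb \<ge> 0 then 1 else 0)\<bar>
    \<le> A0 * ((4 * real CARD('d) + 36) * d * ((real CARD('d) + 1) * e + d)^2)"
proof -
  note g = geom[OF wj bb x dw]
  have r: "\<bar>(norm x)^2 - 1\<bar> \<le> 1" using r_bound Gam_norm[OF x] by blast
  have ns: "\<bar>(2 * real CARD('d) * (w \<bullet> x + bb)^3 + 12 * (w \<bullet> x + bb)^2 * (w \<bullet> x)
      + 6 * (w \<bullet> x + bb) * (w \<bullet> w) * ((norm x)^2 - 1)) * (if w \<bullet> x + bb \<ge> 0 then 1 else 0)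
    - (w \<bullet> x + bb) * (2 * real CARD('d) * (w0 \<bullet> x + bb)^2 + 12 * (w0 \<bullet> x) * (w0 \<bullet> x + bb)
      + 6 * (w0 \<bullet> w0) * ((norm x)^2 - 1)) * (if w0 \<bullet> x + bb \<ge> 0 then 1 else 0)\<bar>
    \<le> (4 * real CARD('d) + 36) * d * ((real CARD('d) + 1) * e + d)^2"
    by (rule neuron_scalar) (use g r in auto)
  have eq: "ai * (2 * real CARD('d) * (w \<bullet> x + bb)^3 + 12 * (w \<bullet> x + bb)^2 * (w \<bullet> x)
      + 6 * (w \<bullet> x + bb) * (w \<bullet> w) * ((norm x)^2 - 1)) * (if w \<bullet> x + bb \<ge> 0 then 1 else 0)
    - ai * (w \<bullet> x + bb) * (2 * real CARD('d) * (w0 \<bullet> x + bb)^2 + 12 * (w0 \<bullet> x) * (w0 \<bullet> x + bb)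
      + 6 * (w0 \<bullet> w0) * ((norm x)^2 - 1)) * (if w0 \<bullet> x + bb \<ge> 0 then 1 else 0)
    = ai * ((2 * real CARD('d) * (w \<bullet> x + bb)^3 + 12 * (w \<bullet> x + bb)^2 * (w \<bullet> x)
      + 6 * (w \<bullet> x + bb) * (w \<bullet> w) * ((norm x)^2 - 1)) * (if w \<bullet> x + bb \<ge> 0 then 1 else 0)
    - (w \<bullet> x + bb) * (2 * real CARD('d) * (w0 \<bullet> x + bb)^2 + 12 * (w0 \<bullet> x) * (w0 \<bullet> x + bb)
      + 6 * (w0 \<bullet> w0) * ((norm x)^2 - 1)) * (if w0 \<bullet> x + bb \<ge> 0 then 1 else 0))"
    by (simp add: algebra_simps)
  show ?thesis unfolding eq by (rule prod_abs_le[OF aa ns])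
qed

lemma neuron_psi_bound:
  fixes w w0 x :: "real^'d::finite"
  assumes wj: "\<forall>j. \<bar>w0 $ j\<bar> \<le> e" and bb: "\<bar>bb\<bar> \<le> e" and x: "x \<in> Gam" and dw: "norm (w - w0) \<le> d"
    and aa: "\<bar>ai\<bar> \<le> A0"
  shows "\<bar>ai * (2 * real CARD('d) * (w \<bullet> x + bb)^3 + 12 * (w \<bullet> x + bb)^2 * (w \<bullet> x)
      + 6 * (w \<bullet> x + bb) * (w \<bullet> w) * ((norm x)^2 - 1)) * (if w \<bullet> x + bb \<ge> 0 then 1 else 0)\<bar>
    \<le> A0 * ((2 * real CARD('d) + 18) * ((real CARD('d) + 1) * e + d)^3)"
proof -
  note g = geom[OF wj bb x dw]
  have r: "\<bar>(norm x)^2 - 1\<bar> \<le> 1" using r_bound Gam_norm[OF x] by blast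
  have c: "\<bar>2 * real CARD('d) * (w \<bullet> x + bb)^3 + 12 * (w \<bullet> x + bb)^2 * (w \<bullet> x)
      + 6 * (w \<bullet> x + bb) * (w \<bullet> w) * ((norm x)^2 - 1)\<bar> \<le> (2 * real CARD('d) + 18) * ((real CARD('d) + 1) * e + d)^3"
    by (rule coef3) (use g r in auto)
  have c': "\<bar>(2 * real CARD('d) * (w \<bullet> x + bb)^3 + 12 * (w \<bullet> x + bb)^2 * (w \<bullet> x)
      + 6 * (w \<bullet> x + bb) * (w \<bullet> w) * ((norm x)^2 - 1)) * (if w \<bullet> x + bb \<ge> 0 then 1 else 0)\<bar>
      \<le> (2 * real CARD('d) + 18) * ((real CARD('d) + 1) * e + d)^3"
    using c g(1,2) by auto
  have "\<bar>ai * ((2 * real CARD('d) * (w \<bullet> x + bb)^3 + 12 * (w \<bullet> x + bb)^2 * (w \<bullet> x)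
      + 6 * (w \<bullet> x + bb) * (w \<bullet> w) * ((norm x)^2 - 1)) * (if w \<bullet> x + bb \<ge> 0 then 1 else 0))\<bar>
    \<le> A0 * ((2 * real CARD('d) + 18) * ((real CARD('d) + 1) * e + d)^3)"
    by (rule prod_abs_le[OF aa c'])
  then show ?thesis by (simp add: mult.assoc)
qed

lemma neuron_g_bound:
  fixes w w0 x :: "real^'d::finite"
  assumes wj: "\<forall>j. \<bar>w0 $ j\<bar> \<le> e" and bb: "\<bar>bb\<bar> \<le> e" and x: "x \<in> Gam" and dw: "norm (w - w0) \<le> d"
    and aa: "\<bar>ai\<bar> \<le> A0"
  shows "\<bar>ai * (w \<bullet> x + bb) * (2 * real CARD('d) * (w0 \<bullet> x + bb)^2 + 12 * (w0 \<bullet> x) * (w0 \<bullet> x + bb)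
      + 6 * (w0 \<bullet> w0) * ((norm x)^2 - 1)) * (if w0 \<bullet> x + bb \<ge> 0 then 1 else 0)\<bar>
    \<le> A0 * (((real CARD('d) + 1) * e + d) * ((2 * real CARD('d) + 18) * ((real CARD('d) + 1) * e)^2))"
    and "\<bar>(2 * real CARD('d) * (w0 \<bullet> x + bb)^2 + 12 * (w0 \<bullet> x) * (w0 \<bullet> x + bb)
      + 6 * (w0 \<bullet> w0) * ((norm x)^2 - 1)) * (if w0 \<bullet> x + bb \<ge> 0 then 1 else 0)\<bar>
      \<le> (2 * real CARD('d) + 18) * ((real CARD('d) + 1) * e)^2"
proof -
  note g = geom[OF wj bb x dw]
  have r: "\<bar>(norm x)^2 - 1\<bar> \<le> 1" using r_bound Gam_norm[OF x] by blast
  have c: "\<bar>2 * real CARD('d) * (w0 \<bullet> x + bb)^2 + 12 * (w0 \<bullet> x) * (w0 \<bullet> x + bb)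
      + 6 * (w0 \<bullet> w0) * ((norm x)^2 - 1)\<bar> \<le> (2 * real CARD('d) + 18) * ((real CARD('d) + 1) * e)^2"
    by (rule coef2) (use g r in auto)
  show c': "\<bar>(2 * real CARD('d) * (w0 \<bullet> x + bb)^2 + 12 * (w0 \<bullet> x) * (w0 \<bullet> x + bb)
      + 6 * (w0 \<bullet> w0) * ((norm x)^2 - 1)) * (if w0 \<bullet> x + bb \<ge> 0 then 1 else 0)\<bar>
      \<le> (2 * real CARD('d) + 18) * ((real CARD('d) + 1) * e)^2"
    using c g(1,2) by auto
  have "\<bar>ai * ((w \<bullet> x + bb) * ((2 * real CARD('d) * (w0 \<bullet> x + bb)^2 + 12 * (w0 \<bullet> x) * (w0 \<bullet> x + bb)
      + 6 * (w0 \<bullet> w0) * ((norm x)^2 - 1)) * (if w0 \<bullet> x + bb \<ge> 0 then 1 else 0)))\<bar>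
    \<le> A0 * (((real CARD('d) + 1) * e + d) * ((2 * real CARD('d) + 18) * ((real CARD('d) + 1) * e)^2))"
    by (intro prod_abs_le aa c' g(11))
  then show "\<bar>ai * (w \<bullet> x + bb) * (2 * real CARD('d) * (w0 \<bullet> x + bb)^2 + 12 * (w0 \<bullet> x) * (w0 \<bullet> x + bb)
      + 6 * (w0 \<bullet> w0) * ((norm x)^2 - 1)) * (if w0 \<bullet> x + bb \<ge> 0 then 1 else 0)\<bar>
    \<le> A0 * (((real CARD('d) + 1) * e + d) * ((2 * real CARD('d) + 18) * ((real CARD('d) + 1) * e)^2))"
    by (simp add: mult.assoc)
qed



lemma gradpsi_bound:
  fixes W :: "nat \<Rightarrow> real^'d::finite" and x :: "real^'d"
  assumes x: "x \<in> Gam" and aa: "\<bar>a i\<bar> \<le> A0" and s: "\<bar>W i \<bullet> x + b i\<bar> \<le> L" and u: "\<bar>W i \<bullet> x\<bar> \<le> L"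
    and q: "\<bar>W i \<bullet> W i\<bar> \<le> L^2" and nw: "norm (W i) \<le> L"
  shows "norm (grad_psi m a b f W x i) \<le> 2 * (\<bar>psi m a b W x\<bar> + \<bar>f x\<bar>) * A0 * ((6 * real CARD('d) + 54) * L^2)"
proof -
  have r: "\<bar>(norm x)^2 - 1\<bar> \<le> 1" using r_bound Gam_norm[OF x] by blast
  have v: "norm ((6 * real CARD('d) * (W i \<bullet> x + b i)^2 + 24 * (W i \<bullet> x + b i) * (W i \<bullet> x) + 12 * (W i \<bullet> x + b i)^2
      + 6 * (W i \<bullet> W i) * ((norm x)^2 - 1)) *\<^sub>R x + (12 * (W i \<bullet> x + b i) * ((norm x)^2 - 1)) *\<^sub>R W i)
      \<le> (6 * real CARD('d) + 54) * L^2"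
    by (rule gvec) (use s u q r nw Gam_norm[OF x] in auto)
  have c: "\<bar>2 * (psi m a b W x - f x) * a i * (if W i \<bullet> x + b i \<ge> 0 then 1 else 0)\<bar>
      \<le> (2 * (\<bar>psi m a b W x\<bar> + \<bar>f x\<bar>) * A0) * 1"
  proof -
    have "\<bar>2 * (psi m a b W x - f x)\<bar> \<le> 2 * (\<bar>psi m a b W x\<bar> + \<bar>f x\<bar>)"
      using abs_triangle_ineq4[of "psi m a b W x" "f x"] by (simp add: abs_mult)
    then have "\<bar>2 * (psi m a b W x - f x) * a i\<bar> \<le> 2 * (\<bar>psi m a b W x\<bar> + \<bar>f x\<bar>) * A0"
      by (rule prod_abs_le[OF _ aa])
    then show ?thesis by (rule prod_abs_le) auto
  qed
  have A0: "A0 \<ge> 0" using aa by linarith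
  have "\<bar>2 * (psi m a b W x - f x) * a i * (if W i \<bullet> x + b i \<ge> 0 then 1 else 0)\<bar> * norm ((6 * real CARD('d) * (W i \<bullet> x + b i)^2 + 24 * (W i \<bullet> x + b i) * (W i \<bullet> x) + 12 * (W i \<bullet> x + b i)^2
      + 6 * (W i \<bullet> W i) * ((norm x)^2 - 1)) *\<^sub>R x + (12 * (W i \<bullet> x + b i) * ((norm x)^2 - 1)) *\<^sub>R W i)
     \<le> ((2 * (\<bar>psi m a b W x\<bar> + \<bar>f x\<bar>) * A0) * 1) * ((6 * real CARD('d) + 54) * L^2)"
    by (rule mult_mono[OF c v]) (use A0 in auto)
  then show ?thesis
    unfolding grad_psi_def Let_def norm_scaleR by simp
qed

lemma gradpseudo_bound:
  fixes W W0 :: "nat \<Rightarrow> real^'d::finite" and x :: "real^'d"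
  assumes wj: "\<forall>j. \<bar>W0 i $ j\<bar> \<le> e" and bb: "\<bar>b i\<bar> \<le> e" and x: "x \<in> Gam"
    and aa: "\<bar>a i\<bar> \<le> A0"
  shows "norm (grad_pseudo m a b f W0 W x i) \<le> 2 * (\<bar>pseudo m a b W0 W x\<bar> + \<bar>f x\<bar>) * A0
      * ((2 * real CARD('d) + 18) * ((real CARD('d) + 1) * e)^2)"
proof -
  have c0: "\<bar>(2 * real CARD('d) * (W0 i \<bullet> x + b i)^2 + 12 * (W0 i \<bullet> x) * (W0 i \<bullet> x + b i)
      + 6 * (W0 i \<bullet> W0 i) * ((norm x)^2 - 1)) * (if W0 i \<bullet> x + b i \<ge> 0 then 1 else 0)\<bar>
      \<le> (2 * real CARD('d) + 18) * ((real CARD('d) + 1) * e)^2"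
    by (rule neuron_g_bound(2)[OF wj bb x, of "W0 i" 0 "a i" A0]) (use aa in auto)
  have "\<bar>2 * (pseudo m a b W0 W x - f x)\<bar> \<le> 2 * (\<bar>pseudo m a b W0 W x\<bar> + \<bar>f x\<bar>)"
    using abs_triangle_ineq4[of "pseudo m a b W0 W x" "f x"] by (simp add: abs_mult)
  then have c1: "\<bar>2 * (pseudo m a b W0 W x - f x) * a i\<bar> \<le> 2 * (\<bar>pseudo m a b W0 W x\<bar> + \<bar>f x\<bar>) * A0"
    by (rule prod_abs_le[OF _ aa])
  have c2: "\<bar>(2 * (pseudo m a b W0 W x - f x) * a i) * ((2 * real CARD('d) * (W0 i \<bullet> x + b i)^2 + 12 * (W0 i \<bullet> x) * (W0 i \<bullet> x + b i)
      + 6 * (W0 i \<bullet> W0 i) * ((norm x)^2 - 1)) * (if W0 i \<bullet> x + b i \<ge> 0 then 1 else 0))\<bar>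
      \<le> (2 * (\<bar>pseudo m a b W0 W x\<bar> + \<bar>f x\<bar>) * A0) * ((2 * real CARD('d) + 18) * ((real CARD('d) + 1) * e)^2)"
    by (rule prod_abs_le[OF c1 c0])
  have "norm (grad_pseudo m a b f W0 W x i) \<le> ((2 * (\<bar>pseudo m a b W0 W x\<bar> + \<bar>f x\<bar>) * A0) * ((2 * real CARD('d) + 18) * ((real CARD('d) + 1) * e)^2)) * 1"
    unfolding grad_pseudo_def norm_scaleR
  proof -
    have A0: "A0 \<ge> 0" using aa by linarith
    have "\<bar>(2 * (pseudo m a b W0 W x - f x) * a i) * ((2 * real CARD('d) * (W0 i \<bullet> x + b i)^2 + 12 * (W0 i \<bullet> x) * (W0 i \<bullet> x + b i)
      + 6 * (W0 i \<bullet> W0 i) * ((norm x)^2 - 1)) * (if W0 i \<bullet> x + b i \<ge> 0 then 1 else 0))\<bar> * norm x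
      \<le> ((2 * (\<bar>pseudo m a b W0 W x\<bar> + \<bar>f x\<bar>) * A0) * ((2 * real CARD('d) + 18) * ((real CARD('d) + 1) * e)^2)) * 1"
      by (rule mult_mono[OF c2 Gam_norm[OF x]]) (use A0 in auto)
    then show "\<bar>2 * (pseudo m a b W0 W x - f x) * a i * (2 * real CARD('d) * (W0 i \<bullet> x + b i)\<^sup>2 + 12 * (W0 i \<bullet> x) * (W0 i \<bullet> x + b i) +
          6 * (W0 i \<bullet> W0 i) * ((norm x)\<^sup>2 - 1)) * (if 0 \<le> W0 i \<bullet> x + b i then 1 else 0)\<bar> * norm x
    \<le> 2 * (\<bar>pseudo m a b W0 W x\<bar> + \<bar>f x\<bar>) * A0 * ((2 * real CARD('d) + 18) * ((real CARD('d) + 1) * e)\<^sup>2) * 1"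
      by (simp only: mult.assoc)
  qed
  then show ?thesis by simp
qed

definition cfc :: "real \<Rightarrow> real" where "cfc n = (2*n+18)*(n+1)^2"
definition C1c :: "real \<Rightarrow> real \<Rightarrow> real" where "C1c K n = 2*((6*n+54)*(K+1)^2)*(K + cfc n)"

lemma eps_le1:
  assumes "(M::real) \<ge> 1" "be \<ge> 0"
  shows "M powr -be \<le> 1" "M powr -be \<ge> 0"
proof -
  have "1 \<le> M powr be" using assms by (rule ge_one_powr_ge_zero)
  then show "M powr -be \<le> 1" by (simp add: powr_minus_divide divide_le_eq)
  show "M powr -be \<ge> 0" by simp
qed

lemma f_bound':
  fixes f :: "real^'d::finite \<Rightarrow> real"
  assumes A: "A \<in> reps m al be f" and An: "repnorm m al be A = nf" and m1: "m \<ge> 1" and x: "x \<in> Gam"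
  shows "\<bar>f x\<bar> \<le> nf * cfc (real CARD('d)) * (real m powr -be)^2 * real m powr -al" "nf \<ge> 0"
proof -
  show "\<bar>f x\<bar> \<le> nf * cfc (real CARD('d)) * (real m powr -be)^2 * real m powr -al"
    using f_bound(1)[OF A m1 x] unfolding An cfc_def by (simp add: power_mult_distrib mult.assoc mult.left_commute)
  show "nf \<ge> 0" using f_bound(2)[OF A m1 x] An by simp
qed

lemma step_bound:
  fixes W :: "nat \<Rightarrow> real^'d::finite" and x :: "real^'d" and f :: "real^'d \<Rightarrow> real"
  assumes K1: "K \<ge> 1" and m1: "m \<ge> 1" and be: "be \<ge> 0"
    and aa: "\<bar>a i\<bar> \<le> real m powr -al" and bb: "\<bar>b i\<bar> \<le> real m powr -be"
    and A: "A \<in> reps m al be f" and An: "repnorm m al be A = nf" and x: "x \<in> Gam"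
    and nW: "norm (W i) \<le> K" and pK: "\<bar>psi m a b W x\<bar> \<le> K"
  shows "norm (grad_psi m a b f W x i) \<le> C1c K (real CARD('d)) * real m powr -al * (real m powr (-al - 2*be) * nf + 1)"
proof -
  define n where "n = real CARD('d)"
  define A0 where "A0 = real m powr -al"
  define e where "e = real m powr -be"
  define G0 where "G0 = (6*n+54)*(K+1)^2"
  have e1: "e \<le> 1" "e \<ge> 0" using eps_le1[of "real m" be] m1 be by (auto simp: e_def)
  have A00: "A0 \<ge> 0" by (simp add: A0_def)
  have x1: "norm x \<le> 1" using x by (rule Gam_norm)
  have u: "\<bar>W i \<bullet> x\<bar> \<le> K"
  proof -
    have "\<bar>W i \<bullet> x\<bar> \<le> norm (W i) * norm x" by (rule Cauchy_Schwarz_ineq2)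
    also have "\<dots> \<le> K * 1" using nW x1 K1 by (intro mult_mono) auto
    finally show ?thesis by simp
  qed
  have q: "\<bar>W i \<bullet> W i\<bar> \<le> (K+1)^2"
  proof -
    have "\<bar>W i \<bullet> W i\<bar> = (norm (W i))^2" by (simp add: power2_norm_eq_inner)
    also have "\<dots> \<le> (K+1)^2" using nW by (intro power_mono) auto
    finally show ?thesis .
  qed
  have g: "norm (grad_psi m a b f W x i) \<le> 2 * (\<bar>psi m a b W x\<bar> + \<bar>f x\<bar>) * A0 * G0"
    unfolding G0_def n_def
    by (rule gradpsi_bound[OF x]) (use aa bb u q nW e1 in \<open>auto simp: A0_def e_def abs_le_iff\<close>)
  have fb: "\<bar>f x\<bar> \<le> nf * cfc n * e^2 * A0" "nf \<ge> 0"
    using f_bound'[OF A An m1 x] by (auto simp: n_def e_def A0_def)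
  have cf0: "cfc n \<ge> 0" by (simp add: cfc_def n_def)
  have G00: "G0 \<ge> 0" by (simp add: G0_def n_def)
  define y where "y = nf * A0 * e^2"
  have y0: "y \<ge> 0" using fb(2) A00 by (simp add: y_def)
  have "2 * (\<bar>psi m a b W x\<bar> + \<bar>f x\<bar>) * A0 * G0 \<le> 2 * (K + cfc n * y) * A0 * G0"
    using pK fb(1) A00 G00 by (intro mult_right_mono) (auto simp: y_def algebra_simps)
  also have "\<dots> \<le> 2 * ((K + cfc n) * (y + 1)) * A0 * G0"
  proof -
    have "K + cfc n * y \<le> (K + cfc n) * (y + 1)" using K1 y0 cf0 by (simp add: algebra_simps)
    then show ?thesis using A00 G00 by (intro mult_right_mono) auto
  qed
  also have "\<dots> = C1c K n * A0 * (y + 1)" by (simp add: C1c_def G0_def algebra_simps)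
  finally have "norm (grad_psi m a b f W x i) \<le> C1c K n * A0 * (y + 1)" using g by linarith
  moreover have "real m powr (-al - 2*be) = A0 * e^2"
    using m1 by (simp add: A0_def e_def powr_add[symmetric] power2_eq_square)
  ultimately show ?thesis by (simp add: y_def n_def A0_def e_def algebra_simps)
qed

lemma drift:
  fixes Ws :: "nat \<Rightarrow> nat \<Rightarrow> real^'d::finite" and f :: "real^'d \<Rightarrow> real"
  assumes K1: "K \<ge> 1" and m1: "m \<ge> 1" and be: "be \<ge> 0" and eta: "\<eta> > 0"
    and init: "\<forall>i\<in>{1..m}. \<bar>a i\<bar> \<le> real m powr (-al) \<and> (\<forall>j. \<bar>w0 i $ j\<bar> \<le> real m powr (-be))
        \<and> \<bar>b i\<bar> \<le> real m powr (-be)"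
    and A: "A \<in> reps m al be f" and An: "repnorm m al be A = nf"
    and XG: "X \<subseteq> Gam" and xsX: "\<forall>t\<in>{1..T}. xs t \<in> X"
    and W0: "\<forall>i\<in>{1..m}. Ws 0 i = w0 i"
    and rec: "\<forall>t\<in>{1..T}. \<forall>i\<in>{1..m}.
       Ws t i = Ws (t - 1) i - \<eta> *\<^sub>R grad_psi m a b f (Ws (t - 1)) (xs t) i"
    and noexp: "\<forall>t\<le>T. (\<forall>i\<in>{1..m}. norm (Ws t i) \<le> K) \<and> (\<forall>x\<in>Gam. \<bar>psi m a b (Ws t) x\<bar> \<le> K)"
  shows "t \<le> T \<Longrightarrow> i \<in> {1..m} \<Longrightarrow> norm (Ws t i - w0 i)
     \<le> C1c K (real CARD('d)) * \<eta> * real t * real m powr -al * (real m powr (-al - 2*be) * nf + 1)"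
proof (induction t)
  case 0
  then show ?case using W0 by simp
next
  case (Suc t)
  define B where "B = C1c K (real CARD('d)) * real m powr -al * (real m powr (-al - 2*be) * nf + 1)"
  have tT: "t \<le> T" and iI: "i \<in> {1..m}" using Suc.prems by auto
  have IH: "norm (Ws t i - w0 i) \<le> B * \<eta> * real t" using Suc.IH[OF tT iI] by (simp add: B_def algebra_simps)
  have xG: "xs (Suc t) \<in> Gam" using xsX XG Suc.prems by auto
  have st: "Ws (Suc t) i = Ws t i - \<eta> *\<^sub>R grad_psi m a b f (Ws t) (xs (Suc t)) i"
    using rec Suc.prems by fastforce
  have gb: "norm (grad_psi m a b f (Ws t) (xs (Suc t)) i) \<le> B"
    unfolding B_def
    by (rule step_bound[OF K1 m1 be _ _ A An xG]) (use init iI noexp tT xG in auto)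
  have "norm (Ws (Suc t) i - w0 i) = norm ((Ws t i - w0 i) - \<eta> *\<^sub>R grad_psi m a b f (Ws t) (xs (Suc t)) i)"
    unfolding st by (simp add: algebra_simps)
  also have "\<dots> \<le> norm (Ws t i - w0 i) + \<eta> * norm (grad_psi m a b f (Ws t) (xs (Suc t)) i)"
    using norm_triangle_ineq4 eta by (simp add: order_trans[OF norm_triangle_ineq4])
  also have "\<dots> \<le> B * \<eta> * real t + \<eta> * B"
    using IH gb eta by (intro add_mono mult_left_mono) auto
  also have "\<dots> = B * \<eta> * real (Suc t)" by (simp add: algebra_simps)
  finally show ?case by (simp add: B_def algebra_simps)
qed

lemma sum_abs_bound:
  fixes h :: "nat \<Rightarrow> real"
  assumes "\<And>i. i \<in> {1..m} \<Longrightarrow> \<bar>h i\<bar> \<le> B"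
  shows "\<bar>\<Sum>i\<in>{1..m}. h i\<bar> \<le> real m * B"
proof -
  have "\<bar>\<Sum>i\<in>{1..m}. h i\<bar> \<le> (\<Sum>i\<in>{1..m}. \<bar>h i\<bar>)" by (rule sum_abs)
  also have "\<dots> \<le> real (card {1..m}) * B" by (rule sum_bounded_above) (use assms in auto)
  finally show ?thesis by simp
qed

lemma net_bounds:
  fixes W w0 :: "nat \<Rightarrow> real^'d::finite" and x :: "real^'d"
  assumes init: "\<forall>i\<in>{1..m}. \<bar>a i\<bar> \<le> A0 \<and> (\<forall>j. \<bar>w0 i $ j\<bar> \<le> e) \<and> \<bar>b i\<bar> \<le> e"
    and dW: "\<forall>i\<in>{1..m}. norm (W i - w0 i) \<le> D" and x: "x \<in> Gam"
  shows "\<bar>psi m a b W x - pseudo m a b w0 W x\<bar> \<le> real m * (A0 * ((4 * real CARD('d) + 36) * D * ((real CARD('d) + 1) * e + D)^2))"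
    "\<bar>psi m a b W x\<bar> \<le> real m * (A0 * ((2 * real CARD('d) + 18) * ((real CARD('d) + 1) * e + D)^3))"
    "\<bar>pseudo m a b w0 W x\<bar> \<le> real m * (A0 * (((real CARD('d) + 1) * e + D) * ((2 * real CARD('d) + 18) * ((real CARD('d) + 1) * e)^2)))"
proof -
  show "\<bar>psi m a b W x - pseudo m a b w0 W x\<bar> \<le> real m * (A0 * ((4 * real CARD('d) + 36) * D * ((real CARD('d) + 1) * e + D)^2))"
    unfolding psi_def pseudo_def sum_subtractf[symmetric]
    by (rule sum_abs_bound, rule neuron_b_vec) (use init dW x in auto)
  show "\<bar>psi m a b W x\<bar> \<le> real m * (A0 * ((2 * real CARD('d) + 18) * ((real CARD('d) + 1) * e + D)^3))"
    unfolding psi_def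
    by (rule sum_abs_bound, rule neuron_psi_bound) (use init dW x in auto)
  show "\<bar>pseudo m a b w0 W x\<bar> \<le> real m * (A0 * (((real CARD('d) + 1) * e + D) * ((2 * real CARD('d) + 18) * ((real CARD('d) + 1) * e)^2)))"
    unfolding pseudo_def
    by (rule sum_abs_bound, rule neuron_g_bound(1)) (use init dW x in auto)
qed

lemma grad_net_bound:
  fixes W w0 :: "nat \<Rightarrow> real^'d::finite" and x :: "real^'d" and f :: "real^'d \<Rightarrow> real"
  assumes init: "\<forall>i\<in>{1..m}. \<bar>a i\<bar> \<le> A0 \<and> (\<forall>j. \<bar>w0 i $ j\<bar> \<le> e) \<and> \<bar>b i\<bar> \<le> e"
    and dW: "\<forall>i\<in>{1..m}. norm (W i - w0 i) \<le> D" and x: "x \<in> Gam"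
  shows "norm21 m (\<lambda>k. grad_psi m a b f W x k - grad_pseudo m a b f w0 W x k)
    \<le> real m * (2 * (\<bar>psi m a b W x\<bar> + \<bar>f x\<bar>) * A0 * ((6 * real CARD('d) + 54) * ((real CARD('d) + 1) * e + D)^2)
         + 2 * (\<bar>pseudo m a b w0 W x\<bar> + \<bar>f x\<bar>) * A0 * ((2 * real CARD('d) + 18) * ((real CARD('d) + 1) * e)^2))"
proof -
  have "norm21 m (\<lambda>k. grad_psi m a b f W x k - grad_pseudo m a b f w0 W x k)
      \<le> real (card {1..m}) * (2 * (\<bar>psi m a b W x\<bar> + \<bar>f x\<bar>) * A0 * ((6 * real CARD('d) + 54) * ((real CARD('d) + 1) * e + D)^2)
         + 2 * (\<bar>pseudo m a b w0 W x\<bar> + \<bar>f x\<bar>) * A0 * ((2 * real CARD('d) + 18) * ((real CARD('d) + 1) * e)^2))"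
    unfolding norm21_def
  proof (rule sum_bounded_above)
    fix k assume k: "k \<in> {1..m}"
    have wj: "\<forall>j. \<bar>w0 k $ j\<bar> \<le> e" and bb: "\<bar>b k\<bar> \<le> e" and aa: "\<bar>a k\<bar> \<le> A0" and dk: "norm (W k - w0 k) \<le> D"
      using init dW k by auto
    note g = geom[OF wj bb x dk]
    have g1: "norm (grad_psi m a b f W x k) \<le> 2 * (\<bar>psi m a b W x\<bar> + \<bar>f x\<bar>) * A0 * ((6 * real CARD('d) + 54) * ((real CARD('d) + 1) * e + D)^2)"
      by (rule gradpsi_bound[where a=a and i=k, OF x aa]) (use g in auto)
    have g2: "norm (grad_pseudo m a b f w0 W x k) \<le> 2 * (\<bar>pseudo m a b w0 W x\<bar> + \<bar>f x\<bar>) * A0 * ((2 * real CARD('d) + 18) * ((real CARD('d) + 1) * e)^2)"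
      by (rule gradpseudo_bound) (use wj bb x aa in auto)
    show "norm (grad_psi m a b f W x k - grad_pseudo m a b f w0 W x k)
      \<le> 2 * (\<bar>psi m a b W x\<bar> + \<bar>f x\<bar>) * A0 * ((6 * real CARD('d) + 54) * ((real CARD('d) + 1) * e + D)^2)
         + 2 * (\<bar>pseudo m a b w0 W x\<bar> + \<bar>f x\<bar>) * A0 * ((2 * real CARD('d) + 18) * ((real CARD('d) + 1) * e)^2)"
      using norm_triangle_ineq4[of "grad_psi m a b f W x k" "grad_pseudo m a b f w0 W x k"] g1 g2 by linarith
  qed
  then show ?thesis by simp
qed

lemma pow_sum_le:
  fixes E D :: real
  assumes "E \<ge> 0" "D \<ge> 0"
  shows "(E + D)^k \<le> 2^k * (E^k + D^k)"
proof (cases "E \<le> D")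
  case True
  have "(E + D)^k \<le> (2*D)^k" using assms True by (intro power_mono) auto
  also have "\<dots> = 2^k * D^k" by (simp add: power_mult_distrib)
  also have "\<dots> \<le> 2^k * (E^k + D^k)" using assms by simp
  finally show ?thesis .
next
  case False
  have "(E + D)^k \<le> (2*E)^k" using assms False by (intro power_mono) auto
  also have "\<dots> = 2^k * E^k" by (simp add: power_mult_distrib)
  also have "\<dots> \<le> 2^k * (E^k + D^k)" using assms by simp
  finally show ?thesis .
qed

definition Kbc :: "real \<Rightarrow> real \<Rightarrow> real" where
  "Kbc C1 n = 2*(4*n+36)*((n+1)^2*C1 + C1^3)"

lemma final_b:
  fixes M A0 e \<eta> tt nf n C1 :: real
  assumes M: "M \<ge> 1" and A0: "A0 \<ge> 0" and e: "e \<ge> 0" and eta: "\<eta> > 0" and tt: "tt \<ge> 0"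
    and nf: "nf \<ge> 0" and n: "n \<ge> 0" and C1: "C1 \<ge> 0"
  shows "M * (A0 * ((4*n+36) * (C1*\<eta>*tt*A0*(A0*e^2*nf+1)) * ((n+1)*e + C1*\<eta>*tt*A0*(A0*e^2*nf+1))^2))
    \<le> Kbc C1 n * (\<eta>^3 * tt^3 * (M * A0^4) * (A0*e^2*nf+1)^3 + \<eta> * tt * (M * A0^2 * e^2) * (A0*e^2*nf+1))"
proof -
  define \<rho> where "\<rho> = A0*e^2*nf+1"
  define D where "D = C1*\<eta>*tt*A0*\<rho>"
  define E where "E = (n+1)*e"
  have r0: "\<rho> \<ge> 1" using A0 e nf by (simp add: \<rho>_def)
  have D0: "D \<ge> 0" using C1 eta tt A0 r0 by (simp add: D_def)
  have E0: "E \<ge> 0" using n e by (simp add: E_def)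
  have sq: "(E + D)^2 \<le> 2 * E^2 + 2 * D^2"
  proof -
    have "0 \<le> (E - D)^2" by simp
    then show ?thesis by (simp add: power2_eq_square algebra_simps)
  qed
  have k0: "M * A0 * (4*n+36) * D \<ge> 0" using M A0 n D0 by simp
  have "M * (A0 * ((4*n+36) * D * (E + D)^2)) = (M * A0 * (4*n+36) * D) * (E + D)^2" by (simp add: algebra_simps)
  also have "\<dots> \<le> (M * A0 * (4*n+36) * D) * (2 * E^2 + 2 * D^2)" by (rule mult_left_mono[OF sq k0])
  also have "\<dots> = 2*(4*n+36) * ((n+1)^2*C1 * (\<eta> * tt * (M * A0^2 * e^2) * \<rho>) + C1^3 * (\<eta>^3 * tt^3 * (M * A0^4) * \<rho>^3))"
    by (simp add: D_def E_def eval_nat_numeral algebra_simps)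
  also have "\<dots> \<le> Kbc C1 n * (\<eta>^3 * tt^3 * (M * A0^4) * \<rho>^3 + \<eta> * tt * (M * A0^2 * e^2) * \<rho>)"
  proof -
    define X1 where "X1 = \<eta>^3 * tt^3 * (M * A0^4) * \<rho>^3"
    define X2 where "X2 = \<eta> * tt * (M * A0^2 * e^2) * \<rho>"
    have X1: "X1 \<ge> 0" using eta tt M A0 r0 by (simp add: X1_def)
    have X2: "X2 \<ge> 0" using eta tt M A0 r0 by (simp add: X2_def)
    have c1: "(n+1)^2*C1 \<ge> 0" "C1^3 \<ge> 0" using C1 n by auto
    have "(n+1)^2*C1 * X2 + C1^3 * X1 \<le> ((n+1)^2*C1 + C1^3) * (X1 + X2)"
      using mult_left_mono[OF _ c1(1), of 0 X1] mult_left_mono[OF _ c1(2), of 0 X2] X1 X2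
      by (simp add: algebra_simps)
    then have "2*(4*n+36) * ((n+1)^2*C1 * X2 + C1^3 * X1) \<le> 2*(4*n+36) * (((n+1)^2*C1 + C1^3) * (X1 + X2))"
      using n by (intro mult_left_mono) auto
    then show ?thesis unfolding X1_def X2_def Kbc_def by (simp add: algebra_simps)
  qed
  finally show ?thesis unfolding \<rho>_def D_def E_def .
qed

definition Kcc :: "real \<Rightarrow> real \<Rightarrow> real \<Rightarrow> real" where
  "Kcc C1 n cf = (let c3 = 2*n+18; c6 = 6*n+54 in
     (64*c3*c6 + 2*c3^2) * (n+1)^5 + 64*c3*c6 * C1^5 + (8*c6*cf + 2*c3*cf) * (n+1)^2
     + 8*c6*cf * C1^2 + 2*c3^2 * C1 * (n+1)^4)"

lemma final_c:
  fixes M A0 e \<eta> tt nf n C1 cf Ps Gs Fx LHS :: real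
  assumes M: "M \<ge> 1" and A0: "A0 \<ge> 0" and e: "e \<ge> 0" and eta: "\<eta> > 0" and tt: "tt \<ge> 0"
    and nf: "nf \<ge> 0" and n: "n \<ge> 0" and C1: "C1 \<ge> 0" and cf: "cf \<ge> 0"
    and Ps: "0 \<le> Ps" "Ps \<le> M * (A0 * ((2*n+18) * ((n+1)*e + C1*\<eta>*tt*A0*(A0*e^2*nf+1))^3))"
    and Gs: "0 \<le> Gs" "Gs \<le> M * (A0 * (((n+1)*e + C1*\<eta>*tt*A0*(A0*e^2*nf+1)) * ((2*n+18) * ((n+1)*e)^2)))"
    and Fx: "0 \<le> Fx" "Fx \<le> nf * cf * e^2 * A0"
    and LHS: "LHS \<le> M * (2 * (Ps + Fx) * A0 * ((6*n+54) * ((n+1)*e + C1*\<eta>*tt*A0*(A0*e^2*nf+1))^2)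
         + 2 * (Gs + Fx) * A0 * ((2*n+18) * ((n+1)*e)^2))"
  shows "LHS \<le> Kcc C1 n cf * (\<eta>^5 * tt^5 * (M^2 * A0^7) * (A0*e^2*nf+1)^5
                 + \<eta>^3 * tt^3 * (M^2 * A0^5 * e^2) * (A0*e^2*nf+1)^3
                 + \<eta>^2 * tt^2 * (M^2 * A0^4 * e^3) * (A0*e^2*nf+1)^2
                 + \<eta>^2 * tt^2 * (M * A0^4 * e^2) * nf * (A0*e^2*nf+1)^2
                 + \<eta> * tt * (M^2 * A0^3 * e^4) * (A0*e^2*nf+1)
                 + (M^2 * A0^2 * e^5)
                 + (M * A0^2 * e^4) * nf)"
proof -
  define \<rho> where "\<rho> = A0*e^2*nf+1"
  define D where "D = C1*\<eta>*tt*A0*\<rho>"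
  define E where "E = (n+1)*e"
  define L where "L = E + D"
  define c3 where "c3 = 2*n+18"
  define c6 where "c6 = 6*n+54"
  have r0: "\<rho> \<ge> 1" using A0 e nf by (simp add: \<rho>_def)
  have D0: "D \<ge> 0" using C1 eta tt A0 r0 by (simp add: D_def)
  have E0: "E \<ge> 0" using n e by (simp add: E_def)
  have L0: "L \<ge> 0" using D0 E0 by (simp add: L_def)
  have c30: "c3 \<ge> 0" "c6 \<ge> 0" using n by (auto simp: c3_def c6_def)
  define F where "F = nf * cf * e^2 * A0"
  have F0: "F \<ge> 0" using nf cf e A0 by (simp add: F_def)
  have step1: "LHS \<le> M * (2 * (M * (A0 * (c3 * L^3)) + F) * A0 * (c6 * L^2)
         + 2 * (M * (A0 * (L * (c3 * E^2))) + F) * A0 * (c3 * E^2))"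
  proof -
    have a1: "2 * (Ps + Fx) * A0 * (c6 * L^2) \<le> 2 * (M * (A0 * (c3 * L^3)) + F) * A0 * (c6 * L^2)"
      using Ps Fx A0 c30 unfolding c3_def c6_def L_def D_def E_def \<rho>_def F_def
      by (intro mult_right_mono mult_left_mono add_mono) auto
    have a2: "2 * (Gs + Fx) * A0 * (c3 * E^2) \<le> 2 * (M * (A0 * (L * (c3 * E^2))) + F) * A0 * (c3 * E^2)"
      using Gs Fx A0 c30 unfolding c3_def c6_def L_def D_def E_def \<rho>_def F_def
      by (intro mult_right_mono mult_left_mono add_mono) auto
    have "LHS \<le> M * (2 * (Ps + Fx) * A0 * (c6 * L^2) + 2 * (Gs + Fx) * A0 * (c3 * E^2))"
      using LHS unfolding c3_def c6_def L_def D_def E_def \<rho>_def .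
    also have "\<dots> \<le> M * (2 * (M * (A0 * (c3 * L^3)) + F) * A0 * (c6 * L^2)
         + 2 * (M * (A0 * (L * (c3 * E^2))) + F) * A0 * (c3 * E^2))"
      using M a1 a2 by (intro mult_left_mono add_mono) auto
    finally show ?thesis .
  qed
  define P1 where "P1 = M^2*A0^2*E^5"
  define P2 where "P2 = M^2*A0^2*D^5"
  define P3 where "P3 = nf*M*A0^2*e^2*E^2"
  define P4 where "P4 = nf*M*A0^2*e^2*D^2"
  define P5 where "P5 = M^2*A0^2*D*E^4"
  have eq: "M * (2 * (M * (A0 * (c3 * L^3)) + F) * A0 * (c6 * L^2)
         + 2 * (M * (A0 * (L * (c3 * E^2))) + F) * A0 * (c3 * E^2))
     = (2*c3*c6) * (M^2*A0^2) * L^5 + (2*c6*cf) * (nf*M*A0^2*e^2) * L^2 + (2*c3^2) * (P1 + P5) + (2*c3*cf) * P3"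
    unfolding P1_def P5_def P3_def F_def L_def by (simp add: eval_nat_numeral algebra_simps)
  have L5: "L^5 \<le> 2^5 * (E^5 + D^5)" unfolding L_def by (rule pow_sum_le[OF E0 D0])
  have L2: "L^2 \<le> 2^2 * (E^2 + D^2)" unfolding L_def by (rule pow_sum_le[OF E0 D0])
  have m1: "(2*c3*c6) * (M^2*A0^2) * L^5 \<le> (64*c3*c6) * (P1 + P2)"
  proof -
    have "(2*c3*c6) * (M^2*A0^2) * L^5 \<le> (2*c3*c6) * (M^2*A0^2) * (2^5 * (E^5 + D^5))"
      using L5 c30 by (intro mult_left_mono) auto
    then show ?thesis unfolding P1_def P2_def by (simp add: algebra_simps)
  qed
  have m2: "(2*c6*cf) * (nf*M*A0^2*e^2) * L^2 \<le> (8*c6*cf) * (P3 + P4)"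
  proof -
    have "(2*c6*cf) * (nf*M*A0^2*e^2) * L^2 \<le> (2*c6*cf) * (nf*M*A0^2*e^2) * (2^2 * (E^2 + D^2))"
      using L2 c30 cf nf M by (intro mult_left_mono) auto
    then show ?thesis unfolding P3_def P4_def by (simp add: algebra_simps)
  qed
  define T1 where "T1 = \<eta>^5 * tt^5 * (M^2 * A0^7) * \<rho>^5"
  define T2 where "T2 = \<eta>^3 * tt^3 * (M^2 * A0^5 * e^2) * \<rho>^3"
  define T3 where "T3 = \<eta>^2 * tt^2 * (M^2 * A0^4 * e^3) * \<rho>^2"
  define T4 where "T4 = \<eta>^2 * tt^2 * (M * A0^4 * e^2) * nf * \<rho>^2"
  define T5 where "T5 = \<eta> * tt * (M^2 * A0^3 * e^4) * \<rho>"
  define T6 where "T6 = M^2 * A0^2 * e^5"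
  define T7 where "T7 = (M * A0^2 * e^4) * nf"
  have PT: "P1 = (n+1)^5 * T6" "P2 = C1^5 * T1" "P3 = (n+1)^2 * T7" "P4 = C1^2 * T4" "P5 = C1 * (n+1)^4 * T5"
    unfolding P1_def P2_def P3_def P4_def P5_def T1_def T4_def T5_def T6_def T7_def D_def E_def
    by (simp_all add: eval_nat_numeral algebra_simps)
  have T0: "T1 \<ge> 0" "T2 \<ge> 0" "T3 \<ge> 0" "T4 \<ge> 0" "T5 \<ge> 0" "T6 \<ge> 0" "T7 \<ge> 0"
    unfolding T1_def T2_def T3_def T4_def T5_def T6_def T7_def using eta tt M A0 e nf r0 by auto
  have "LHS \<le> (64*c3*c6 + 2*c3^2) * (n+1)^5 * T6 + 64*c3*c6 * C1^5 * T1 + (8*c6*cf + 2*c3*cf) * (n+1)^2 * T7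
     + 8*c6*cf * C1^2 * T4 + 2*c3^2 * C1 * (n+1)^4 * T5"
    using step1 eq m1 m2 unfolding PT by (simp add: algebra_simps)
  also have "\<dots> \<le> Kcc C1 n cf * (T1 + T2 + T3 + T4 + T5 + T6 + T7)"
  proof -
    define k1 where "k1 = (64*c3*c6 + 2*c3^2) * (n+1)^5"
    define k2 where "k2 = 64*c3*c6 * C1^5"
    define k3 where "k3 = (8*c6*cf + 2*c3*cf) * (n+1)^2"
    define k4 where "k4 = 8*c6*cf * C1^2"
    define k5 where "k5 = 2*c3^2 * C1 * (n+1)^4"
    have k0: "k1 \<ge> 0" "k2 \<ge> 0" "k3 \<ge> 0" "k4 \<ge> 0" "k5 \<ge> 0"
      unfolding k1_def k2_def k3_def k4_def k5_def using c30 C1 cf n by auto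
    have K: "Kcc C1 n cf = k1 + k2 + k3 + k4 + k5"
      unfolding Kcc_def Let_def k1_def k2_def k3_def k4_def k5_def c3_def c6_def by simp
    have "k1 * T6 + k2 * T1 + k3 * T7 + k4 * T4 + k5 * T5 \<le> (k1 + k2 + k3 + k4 + k5) * (T1 + T2 + T3 + T4 + T5 + T6 + T7)"
    proof -
      have i1: "k1 * T6 \<le> k1 * (T1 + T2 + T3 + T4 + T5 + T6 + T7)" using T0 k0 by (intro mult_left_mono) auto
      have i2: "k2 * T1 \<le> k2 * (T1 + T2 + T3 + T4 + T5 + T6 + T7)" using T0 k0 by (intro mult_left_mono) auto
      have i3: "k3 * T7 \<le> k3 * (T1 + T2 + T3 + T4 + T5 + T6 + T7)" using T0 k0 by (intro mult_left_mono) auto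
      have i4: "k4 * T4 \<le> k4 * (T1 + T2 + T3 + T4 + T5 + T6 + T7)" using T0 k0 by (intro mult_left_mono) auto
      have i5: "k5 * T5 \<le> k5 * (T1 + T2 + T3 + T4 + T5 + T6 + T7)" using T0 k0 by (intro mult_left_mono) auto
      show ?thesis using i1 i2 i3 i4 i5 by (simp add: distrib_right)
    qed
    then show ?thesis unfolding K k1_def k2_def k3_def k4_def k5_def by simp
  qed
  finally show ?thesis unfolding T1_def T2_def T3_def T4_def T5_def T6_def T7_def \<rho>_def .
qed

definition Cfin :: "real \<Rightarrow> real \<Rightarrow> real" where
  "Cfin K n = C1c K n + Kbc (C1c K n) n + Kcc (C1c K n) n (cfc n) + 1"

theorem theorem3p3:
  fixes K :: real
  assumes "K \<ge> 1"
  shows "\<exists>C>0. \<forall>(m::nat) (al::real) (be::real) (a::nat \<Rightarrow> real) (b::nat \<Rightarrow> real)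
      (w0::nat \<Rightarrow> real^'d::finite) (f::real^'d \<Rightarrow> real) (\<eta>::real) (T::nat) (N::nat)
      (X::(real^'d) set) (xs::nat \<Rightarrow> real^'d) (Ws::nat \<Rightarrow> nat \<Rightarrow> real^'d).
    m \<ge> 1 \<and> al \<ge> 0 \<and> be \<ge> 0 \<and> \<eta> > 0 \<and>
    (\<forall>i\<in>{1..m}. \<bar>a i\<bar> \<le> real m powr (-al) \<and> (\<forall>j. \<bar>w0 i $ j\<bar> \<le> real m powr (-be))
        \<and> \<bar>b i\<bar> \<le> real m powr (-be)) \<and>
    inF m al be f \<and>
    (\<exists>A\<in>reps m al be f. repnorm m al be A = Fnorm m al be f) \<and>
    finite X \<and> card X = N \<and> X \<subseteq> Gam \<and>
    (\<forall>t\<in>{1..T}. xs t \<in> X) \<and>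
    (\<forall>i\<in>{1..m}. Ws 0 i = w0 i) \<and>
    (\<forall>t\<in>{1..T}. \<forall>i\<in>{1..m}.
       Ws t i = Ws (t - 1) i - \<eta> *\<^sub>R grad_psi m a b f (Ws (t - 1)) (xs t) i) \<and>
    (\<forall>t\<le>T. (\<forall>i\<in>{1..m}. norm (Ws t i) \<le> K) \<and> (\<forall>x\<in>Gam. \<bar>psi m a b (Ws t) x\<bar> \<le> K))
    \<longrightarrow>
    (\<forall>x\<in>Gam. \<forall>t\<in>{1..T}. \<forall>i\<in>{1..m}.
      (let \<rho> = real m powr (-al - 2*be) * Fnorm m al be f + 1; tt = real t; M = real m;
           nf = Fnorm m al be f in
       norm (Ws t i - w0 i) \<le> C * \<eta> * tt * M powr (-al) * \<rho>
       \<and> \<bar>psi m a b (Ws t) x - pseudo m a b w0 (Ws t) x\<bar>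
           \<le> C * (\<eta>^3 * tt^3 * M powr (1 - 4*al) * \<rho>^3 + \<eta> * tt * M powr (1 - 2*al - 2*be) * \<rho>)
       \<and> norm21 m (\<lambda>k. grad_psi m a b f (Ws t) x k - grad_pseudo m a b f w0 (Ws t) x k)
           \<le> C * (\<eta>^5 * tt^5 * M powr (2 - 7*al) * \<rho>^5
                 + \<eta>^3 * tt^3 * M powr (2 - 5*al - 2*be) * \<rho>^3
                 + \<eta>^2 * tt^2 * M powr (2 - 4*al - 3*be) * \<rho>^2
                 + \<eta>^2 * tt^2 * M powr (1 - 4*al - 2*be) * nf * \<rho>^2
                 + \<eta> * tt * M powr (2 - 3*al - 4*be) * \<rho>
                 + M powr (2 - 2*al - 5*be)
                 + M powr (1 - 2*al - 4*be) * nf)))"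
proof -
  define n where "n = real CARD('d)"
  define C1 where "C1 = C1c K n"
  have n0: "n \<ge> 0" by (simp add: n_def)
  have C10: "C1 \<ge> 0" using assms by (simp add: C1_def C1c_def cfc_def n_def)
  have Kb0: "Kbc C1 n \<ge> 0" using C10 n0 by (simp add: Kbc_def)
  have Kc0: "Kcc C1 n (cfc n) \<ge> 0" using C10 n0 by (simp add: Kcc_def Let_def cfc_def)
  define C where "C = Cfin K n"
  have CC: "C = C1 + Kbc C1 n + Kcc C1 n (cfc n) + 1" by (simp add: C_def Cfin_def C1_def)
  have C0: "C > 0" using CC C10 Kb0 Kc0 by linarith
  show ?thesis
  proof (rule exI[of _ C], intro conjI allI impI C0)
    fix m :: nat and al be :: real and a b :: "nat \<Rightarrow> real" and w0 :: "nat \<Rightarrow> real^'d"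
      and f :: "real^'d \<Rightarrow> real" and \<eta> :: real and T N :: nat and X :: "(real^'d) set"
      and xs :: "nat \<Rightarrow> real^'d" and Ws :: "nat \<Rightarrow> nat \<Rightarrow> real^'d"
    assume H: "m \<ge> 1 \<and> al \<ge> 0 \<and> be \<ge> 0 \<and> \<eta> > 0 \<and>
    (\<forall>i\<in>{1..m}. \<bar>a i\<bar> \<le> real m powr (-al) \<and> (\<forall>j. \<bar>w0 i $ j\<bar> \<le> real m powr (-be))
        \<and> \<bar>b i\<bar> \<le> real m powr (-be)) \<and>
    inF m al be f \<and>
    (\<exists>A\<in>reps m al be f. repnorm m al be A = Fnorm m al be f) \<and>
    finite X \<and> card X = N \<and> X \<subseteq> Gam \<and>
    (\<forall>t\<in>{1..T}. xs t \<in> X) \<and>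
    (\<forall>i\<in>{1..m}. Ws 0 i = w0 i) \<and>
    (\<forall>t\<in>{1..T}. \<forall>i\<in>{1..m}.
       Ws t i = Ws (t - 1) i - \<eta> *\<^sub>R grad_psi m a b f (Ws (t - 1)) (xs t) i) \<and>
    (\<forall>t\<le>T. (\<forall>i\<in>{1..m}. norm (Ws t i) \<le> K) \<and> (\<forall>x\<in>Gam. \<bar>psi m a b (Ws t) x\<bar> \<le> K))"
    then have m1: "m \<ge> 1" and al: "al \<ge> 0" and be: "be \<ge> 0" and eta: "\<eta> > 0"
      and init: "\<forall>i\<in>{1..m}. \<bar>a i\<bar> \<le> real m powr (-al) \<and> (\<forall>j. \<bar>w0 i $ j\<bar> \<le> real m powr (-be))
        \<and> \<bar>b i\<bar> \<le> real m powr (-be)"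
      and exA: "\<exists>A\<in>reps m al be f. repnorm m al be A = Fnorm m al be f"
      and XG: "X \<subseteq> Gam" and xsX: "\<forall>t\<in>{1..T}. xs t \<in> X"
      and W0: "\<forall>i\<in>{1..m}. Ws 0 i = w0 i"
      and rec: "\<forall>t\<in>{1..T}. \<forall>i\<in>{1..m}.
       Ws t i = Ws (t - 1) i - \<eta> *\<^sub>R grad_psi m a b f (Ws (t - 1)) (xs t) i"
      and noexp: "\<forall>t\<le>T. (\<forall>i\<in>{1..m}. norm (Ws t i) \<le> K) \<and> (\<forall>x\<in>Gam. \<bar>psi m a b (Ws t) x\<bar> \<le> K)"
      by auto
    obtain A where A: "A \<in> reps m al be f" and An: "repnorm m al be A = Fnorm m al be f" using exA by blast
    define nf where "nf = Fnorm m al be f"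
    define M where "M = real m"
    define A0 where "A0 = M powr -al"
    define e where "e = M powr -be"
    have M1: "M \<ge> 1" using m1 by (simp add: M_def)
    have M0: "M > 0" using M1 by simp
    have A00: "A0 \<ge> 0" by (simp add: A0_def)
    have e0: "e \<ge> 0" by (simp add: e_def)
    have rho: "M powr (-al - 2*be) * nf + 1 = A0 * e^2 * nf + 1"
      using M0 by (simp add: A0_def e_def powr_add[symmetric] power2_eq_square)
    show "\<forall>x\<in>Gam. \<forall>t\<in>{1..T}. \<forall>i\<in>{1..m}.
      (let \<rho> = real m powr (-al - 2*be) * Fnorm m al be f + 1; tt = real t; M = real m;
           nf = Fnorm m al be f in
       norm (Ws t i - w0 i) \<le> C * \<eta> * tt * M powr (-al) * \<rho>
       \<and> \<bar>psi m a b (Ws t) x - pseudo m a b w0 (Ws t) x\<bar>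
           \<le> C * (\<eta>^3 * tt^3 * M powr (1 - 4*al) * \<rho>^3 + \<eta> * tt * M powr (1 - 2*al - 2*be) * \<rho>)
       \<and> norm21 m (\<lambda>k. grad_psi m a b f (Ws t) x k - grad_pseudo m a b f w0 (Ws t) x k)
           \<le> C * (\<eta>^5 * tt^5 * M powr (2 - 7*al) * \<rho>^5
                 + \<eta>^3 * tt^3 * M powr (2 - 5*al - 2*be) * \<rho>^3
                 + \<eta>^2 * tt^2 * M powr (2 - 4*al - 3*be) * \<rho>^2
                 + \<eta>^2 * tt^2 * M powr (1 - 4*al - 2*be) * nf * \<rho>^2
                 + \<eta> * tt * M powr (2 - 3*al - 4*be) * \<rho>
                 + M powr (2 - 2*al - 5*be)
                 + M powr (1 - 2*al - 4*be) * nf))"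
    proof (intro ballI)
      fix x :: "real^'d" and t i :: nat assume x: "x \<in> Gam" and t: "t \<in> {1..T}" and i: "i \<in> {1..m}"
      define tt where "tt = real t"
      define \<rho> where "\<rho> = A0 * e^2 * nf + 1"
      have tt0: "tt \<ge> 0" by (simp add: tt_def)
      have nf0: "nf \<ge> 0" using f_bound'(2)[OF A An m1 x] by (simp add: nf_def)
      have r1: "\<rho> \<ge> 1" using A00 e0 nf0 by (simp add: \<rho>_def)
      define D where "D = C1 * \<eta> * tt * A0 * \<rho>"
      have dW: "\<forall>k\<in>{1..m}. norm (Ws t k - w0 k) \<le> D"
      proof
        fix k assume k: "k \<in> {1..m}"
        have "norm (Ws t k - w0 k) \<le> C1c K (real CARD('d)) * \<eta> * real t * real m powr -al * (real m powr (-al - 2*be) * nf + 1)"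
          by (rule drift[OF assms m1 be eta init A An[folded nf_def] XG xsX W0 rec noexp]) (use t k in auto)
        then show "norm (Ws t k - w0 k) \<le> D"
          using rho unfolding D_def C1_def n_def tt_def \<rho>_def M_def A0_def by simp
      qed
      have init': "\<forall>i\<in>{1..m}. \<bar>a i\<bar> \<le> A0 \<and> (\<forall>j. \<bar>w0 i $ j\<bar> \<le> e) \<and> \<bar>b i\<bar> \<le> e"
        using init by (simp add: A0_def e_def M_def)
      have pa: "norm (Ws t i - w0 i) \<le> C * \<eta> * tt * A0 * \<rho>"
      proof -
        have "D \<le> C * \<eta> * tt * A0 * \<rho>"
          unfolding D_def using CC Kb0 Kc0 eta tt0 A00 r1
          by (intro mult_right_mono) auto
        then show ?thesis using dW i by force
      qed
      have pb: "\<bar>psi m a b (Ws t) x - pseudo m a b w0 (Ws t) x\<bar>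
           \<le> C * (\<eta>^3 * tt^3 * (M * A0^4) * \<rho>^3 + \<eta> * tt * (M * A0^2 * e^2) * \<rho>)"
      proof -
        have "\<bar>psi m a b (Ws t) x - pseudo m a b w0 (Ws t) x\<bar> \<le> M * (A0 * ((4 * n + 36) * D * ((n + 1) * e + D)^2))"
          using net_bounds(1)[OF init' dW x] by (simp add: n_def M_def)
        also have "\<dots> \<le> Kbc C1 n * (\<eta>^3 * tt^3 * (M * A0^4) * \<rho>^3 + \<eta> * tt * (M * A0^2 * e^2) * \<rho>)"
          unfolding D_def \<rho>_def by (rule final_b[OF M1 A00 e0 eta tt0 nf0 n0 C10])
        also have "\<dots> \<le> C * (\<eta>^3 * tt^3 * (M * A0^4) * \<rho>^3 + \<eta> * tt * (M * A0^2 * e^2) * \<rho>)"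
          using CC C10 Kc0 eta tt0 M1 A00 e0 r1 by (intro mult_right_mono) auto
        finally show ?thesis .
      qed
      have pc: "norm21 m (\<lambda>k. grad_psi m a b f (Ws t) x k - grad_pseudo m a b f w0 (Ws t) x k)
         \<le> C * (\<eta>^5 * tt^5 * (M^2 * A0^7) * \<rho>^5
                 + \<eta>^3 * tt^3 * (M^2 * A0^5 * e^2) * \<rho>^3
                 + \<eta>^2 * tt^2 * (M^2 * A0^4 * e^3) * \<rho>^2
                 + \<eta>^2 * tt^2 * (M * A0^4 * e^2) * nf * \<rho>^2
                 + \<eta> * tt * (M^2 * A0^3 * e^4) * \<rho>
                 + (M^2 * A0^2 * e^5)
                 + (M * A0^2 * e^4) * nf)"
      proof -
        have fx: "\<bar>f x\<bar> \<le> nf * cfc n * e^2 * A0"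
          using f_bound'(1)[OF A An m1 x] by (simp add: nf_def n_def e_def A0_def M_def)
        have ps: "\<bar>psi m a b (Ws t) x\<bar> \<le> M * (A0 * ((2*n+18) * ((n+1)*e + C1*\<eta>*tt*A0*(A0*e^2*nf+1))^3))"
          using net_bounds(2)[OF init' dW x] by (simp add: n_def M_def D_def \<rho>_def)
        have gs: "\<bar>pseudo m a b w0 (Ws t) x\<bar> \<le> M * (A0 * (((n+1)*e + C1*\<eta>*tt*A0*(A0*e^2*nf+1)) * ((2*n+18) * ((n+1)*e)^2)))"
          using net_bounds(3)[OF init' dW x] by (simp add: n_def M_def D_def \<rho>_def)
        have gl: "norm21 m (\<lambda>k. grad_psi m a b f (Ws t) x k - grad_pseudo m a b f w0 (Ws t) x k)
          \<le> M * (2 * (\<bar>psi m a b (Ws t) x\<bar> + \<bar>f x\<bar>) * A0 * ((6*n+54) * ((n+1)*e + C1*\<eta>*tt*A0*(A0*e^2*nf+1))^2)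
         + 2 * (\<bar>pseudo m a b w0 (Ws t) x\<bar> + \<bar>f x\<bar>) * A0 * ((2*n+18) * ((n+1)*e)^2))"
          using grad_net_bound[OF init' dW x, of f] by (simp add: n_def M_def D_def \<rho>_def)
        have cf0: "cfc n \<ge> 0" using n0 by (simp add: cfc_def)
        have "norm21 m (\<lambda>k. grad_psi m a b f (Ws t) x k - grad_pseudo m a b f w0 (Ws t) x k)
         \<le> Kcc C1 n (cfc n) * (\<eta>^5 * tt^5 * (M^2 * A0^7) * (A0*e^2*nf+1)^5
                 + \<eta>^3 * tt^3 * (M^2 * A0^5 * e^2) * (A0*e^2*nf+1)^3
                 + \<eta>^2 * tt^2 * (M^2 * A0^4 * e^3) * (A0*e^2*nf+1)^2
                 + \<eta>^2 * tt^2 * (M * A0^4 * e^2) * nf * (A0*e^2*nf+1)^2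
                 + \<eta> * tt * (M^2 * A0^3 * e^4) * (A0*e^2*nf+1)
                 + (M^2 * A0^2 * e^5)
                 + (M * A0^2 * e^4) * nf)"
          by (rule final_c[OF M1 A00 e0 eta tt0 nf0 n0 C10 cf0 _ ps _ gs _ fx gl]) auto
        also have "\<dots> \<le> C * (\<eta>^5 * tt^5 * (M^2 * A0^7) * (A0*e^2*nf+1)^5
                 + \<eta>^3 * tt^3 * (M^2 * A0^5 * e^2) * (A0*e^2*nf+1)^3
                 + \<eta>^2 * tt^2 * (M^2 * A0^4 * e^3) * (A0*e^2*nf+1)^2
                 + \<eta>^2 * tt^2 * (M * A0^4 * e^2) * nf * (A0*e^2*nf+1)^2
                 + \<eta> * tt * (M^2 * A0^3 * e^4) * (A0*e^2*nf+1)
                 + (M^2 * A0^2 * e^5)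
                 + (M * A0^2 * e^4) * nf)"
          using CC C10 Kb0 eta tt0 M1 A00 e0 r1 nf0 unfolding \<rho>_def by (intro mult_right_mono) auto
        finally show ?thesis unfolding \<rho>_def .
      qed
      have pw: "M powr (1 - 4*al) = M * A0^4" "M powr (1 - 2*al - 2*be) = M * A0^2 * e^2"
        "M powr (2 - 7*al) = M^2 * A0^7" "M powr (2 - 5*al - 2*be) = M^2 * A0^5 * e^2"
        "M powr (2 - 4*al - 3*be) = M^2 * A0^4 * e^3" "M powr (1 - 4*al - 2*be) = M * A0^4 * e^2"
        "M powr (2 - 3*al - 4*be) = M^2 * A0^3 * e^4" "M powr (2 - 2*al - 5*be) = M^2 * A0^2 * e^5"
        "M powr (1 - 2*al - 4*be) = M * A0^2 * e^4"
        using powr_split[OF M0, of 1 4 al 0 be] powr_split[OF M0, of 1 2 al 2 be]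
          powr_split[OF M0, of 2 7 al 0 be] powr_split[OF M0, of 2 5 al 2 be]
          powr_split[OF M0, of 2 4 al 3 be] powr_split[OF M0, of 1 4 al 2 be]
          powr_split[OF M0, of 2 3 al 4 be] powr_split[OF M0, of 2 2 al 5 be]
          powr_split[OF M0, of 1 2 al 4 be]
        by (simp_all add: A0_def e_def)
      show "let \<rho> = real m powr (-al - 2*be) * Fnorm m al be f + 1; tt = real t; M = real m;
           nf = Fnorm m al be f in
       norm (Ws t i - w0 i) \<le> C * \<eta> * tt * M powr (-al) * \<rho>
       \<and> \<bar>psi m a b (Ws t) x - pseudo m a b w0 (Ws t) x\<bar>
           \<le> C * (\<eta>^3 * tt^3 * M powr (1 - 4*al) * \<rho>^3 + \<eta> * tt * M powr (1 - 2*al - 2*be) * \<rho>)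
       \<and> norm21 m (\<lambda>k. grad_psi m a b f (Ws t) x k - grad_pseudo m a b f w0 (Ws t) x k)
           \<le> C * (\<eta>^5 * tt^5 * M powr (2 - 7*al) * \<rho>^5
                 + \<eta>^3 * tt^3 * M powr (2 - 5*al - 2*be) * \<rho>^3
                 + \<eta>^2 * tt^2 * M powr (2 - 4*al - 3*be) * \<rho>^2
                 + \<eta>^2 * tt^2 * M powr (1 - 4*al - 2*be) * nf * \<rho>^2
                 + \<eta> * tt * M powr (2 - 3*al - 4*be) * \<rho>
                 + M powr (2 - 2*al - 5*be)
                 + M powr (1 - 2*al - 4*be) * nf)"
      proof -
        have rho': "real m powr (-al - 2*be) * Fnorm m al be f + 1 = \<rho>"
          using rho by (simp add: M_def nf_def \<rho>_def)
        show ?thesis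
          unfolding Let_def rho' M_def[symmetric] pw A0_def[symmetric] tt_def[symmetric] nf_def[symmetric]
          unfolding rho \<rho>_def[symmetric]
          using pa pb pc by blast
      qed
    qed
  qed
qed

end
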